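(* In the setting described in the context, $V$ is an irreducible $\mathcal U$-module on which the generators act as follows: $y^+_0$ acts as $a^{-1}A$, $y^+_1$ as $a^{*-1}A^*$, $y^-_0$ as $b^{*-1}B^*$, $y^-_1$ as $b^{-1}B$, $k_0$ as $K^*$, $k_1$ as $K^{*-1}$, $k_0^{-1}$ as $K^{*-1}$, and $k_1^{-1}$ as $K^*$.
   Context: $\mathbb K$ is an algebraically closed field, $q\in\mathbb K$ nonzero and not a root of unity, $[3]_q=\frac{q^3-q^{-3}}{q-q^{-1}}$, $V$ a nonzero finite-dimensional $\mathbb K$-vector space. $\mathcal U$ (isomorphic to $U_q(\widehat{sl}_2)$) is the unital associative $\mathbb K$-algebra with generators $y^{\pm}_i,k_i^{\pm1}$ ($i\in\{0,1\}$) and relations: $k_ik_i^{-1}=k_i^{-1}k_i=1$; $k_0k_1$ central; $\frac{qy^+_ik_i-q^{-1}k_iy^+_i}{q-q^{-1}}=1$; $\frac{qk_iy^-_i-q^{-1}y^-_ik_i}{q-q^{-1}}=1$; $\frac{qy^-_iy^+_i-q^{-1}y^+_iy^-_i}{q-q^{-1}}=1$; $\frac{qy^+_iy^-_j-q^{-1}y^-_jy^+_i}{q-q^{-1}}=k_0^{-1}k_1^{-1}$ ($i\ne j$); $(y^{\pm}_i)^3y^{\pm}_j-[3]_q(y^{\pm}_i)^2y^{\pm}_jy^{\pm}_i+[3]_qy^{\pm}_iy^{\pm}_j(y^{\pm}_i)^2-y^{\pm}_j(y^{\pm}_i)^3=0$ ($i\ne j$). A tridiagonal pair on $V$ is an ordered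 pair $A,A^*$ of linear maps $V\to V$ such that: (i) each is diagonalizable; (ii) there is an ordering $V_0,\dots,V_d$ of the eigenspaces of $A$ with $A^*V_i\subseteq V_{i-1}+V_i+V_{i+1}$ ($V_{-1}=V_{d+1}=0$); (iii) there is an ordering $V^*_0,\dots,V^*_\delta$ of the eigenspaces of $A^*$ with $AV^*_i\subseteq V^*_{i-1}+V^*_i+V^*_{i+1}$ ($V^*_{-1}=V^*_{\delta+1}=0$); (iv) no subspace $W\ne0,V$ satisfies $AW\subseteq W$, $A^*W\subseteq W$. It is known $d=\delta$; orderings as in (ii),(iii) are called standard. Setting: $A,A^*$ is a tridiagonal pair on $V$; $V_0,\dots,V_d$ (resp. $V^*_0,\dots,V^*_d$) is a standard ordering of the eigenspaces of $A$ (resp. $A^*$); the eigenvalue of $A$ on $V_i$ is $aq^{2i-d}$ and that of $A^*$ on $V^*_i$ is $a^*q^{d-2i}$ for nonzero $a,a^*\in\mathbb K$; $b,b^*\in\mathbb K$ nonzero. For $0\le i\le d$, each of the families $(V^*_0+\cdots+V^*_i)\cap(V_0+\cdots+V_{d-i})$, $(V^*_{d-i}+\cdots+V^*_d)\cap(V_i+\cdots+V_d)$, $(V^*_{d-i}+\cdots+V^*_d)\cap(V_0+\cdots+V_{d-i})$ is a decomposition of $V$ (nonzero subspaces, direct sum equal to $V$). $B$ acts as $bq^{2i-d}I$ on $(V^*_0+\cdots+V^*_i)\cap(V_0+\cdots+V_{d-i})$; $B^*$ acts as $b^*q^{d-2i}I$ on $(V^*_{d-i}+\cdots+V^*_d)\cap(V_i+\cdots+V_d)$;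 $K^*$ acts as $q^{2i-d}I$ on $(V^*_{d-i}+\cdots+V^*_d)\cap(V_0+\cdots+V_{d-i})$. *)

theory Defs
  imports "HOL-Analysis.Analysis" "HOL-Computational_Algebra.Polynomial"
begin

(* V is modelled as 'k^'n (any nonzero finite-dimensional K-space is of this form,
   'n a finite nonempty index type); linear maps V -> V are matrices 'k^'n^'n
   acting by matrix-vector product. *)

definition eigenspace :: "'k::field^'n^'n \<Rightarrow> 'k \<Rightarrow> ('k^'n) set" where
  "eigenspace M \<theta> = {v. M *v v = \<theta> *s v}"

definition is_eigenvalue :: "'k::field^'n^'n \<Rightarrow> 'k \<Rightarrow> bool" where
  "is_eigenvalue M \<theta> \<longleftrightarrow> eigenspace M \<theta> \<noteq> {0}"

definition diagonalizable :: "'k::field^'n^'n \<Rightarrow> bool" where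
  "diagonalizable M \<longleftrightarrow> vec.span (\<Union>\<theta>. eigenspace M \<theta>) = UNIV"

definition ssum :: "(nat \<Rightarrow> ('k::field^'n) set) \<Rightarrow> nat set \<Rightarrow> ('k^'n) set" where
  "ssum W I = vec.span (\<Union>i\<in>I. W i)"

definition eigenspace_ordering :: "'k::field^'n^'n \<Rightarrow> (nat \<Rightarrow> ('k^'n) set) \<Rightarrow> nat \<Rightarrow> bool" where
  "eigenspace_ordering M W d \<longleftrightarrow>
     (\<exists>\<theta>::nat \<Rightarrow> 'k. inj_on \<theta> {0..d} \<and> {t. is_eigenvalue M t} = \<theta> ` {0..d}
        \<and> (\<forall>i\<le>d. W i = eigenspace M (\<theta> i)))"

(* condition (ii)/(iii): N W_i \<subseteq> W_{i-1} + W_i + W_{i+1}, with W_{-1} = W_{d+1} = 0 *)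
definition tridiag_ordering :: "'k::field^'n^'n \<Rightarrow> (nat \<Rightarrow> ('k^'n) set) \<Rightarrow> nat \<Rightarrow> bool" where
  "tridiag_ordering N W d \<longleftrightarrow>
     (\<forall>i\<le>d. (\<lambda>v. N *v v) ` W i \<subseteq> ssum W ({i - 1, i, i + 1} \<inter> {0..d}))"

definition tridiagonal_pair :: "'k::field^'n^'n \<Rightarrow> 'k^'n^'n \<Rightarrow> bool" where
  "tridiagonal_pair A As \<longleftrightarrow>
     diagonalizable A \<and> diagonalizable As \<and>
     (\<exists>W d. eigenspace_ordering A W d \<and> tridiag_ordering As W d) \<and>
     (\<exists>W d. eigenspace_ordering As W d \<and> tridiag_ordering A W d) \<and>
     (\<forall>U. vec.subspace U \<and> (\<lambda>v. A *v v) ` U \<subseteq> U \<and> (\<lambda>v. As *v v) ` U \<subseteq> U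
          \<longrightarrow> U = {0} \<or> U = UNIV)"

definition decomposition :: "(nat \<Rightarrow> ('k::field^'n) set) \<Rightarrow> nat \<Rightarrow> bool" where
  "decomposition W d \<longleftrightarrow>
     (\<forall>i\<le>d. vec.subspace (W i) \<and> W i \<noteq> {0}) \<and>
     (\<forall>v. \<exists>w. (\<forall>i\<le>d. w i \<in> W i) \<and> v = (\<Sum>i\<le>d. w i)) \<and>
     (\<forall>w. (\<forall>i\<le>d. w i \<in> W i) \<and> (\<Sum>i\<le>d. w i) = 0 \<longrightarrow> (\<forall>i\<le>d. w i = 0))"

definition qint3 :: "'k::field \<Rightarrow> 'k" where
  "qint3 q = (q ^ 3 - inverse q ^ 3) / (q - inverse q)"

(* The defining relations of U, for the images Y0p = y^+_0, Y1p = y^+_1,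
   Y0m = y^-_0, Y1m = y^-_1, K0 = k_0, K1 = k_1, K0i = k_0^{-1}, K1i = k_1^{-1}. *)
definition U_relations ::
  "'k::field \<Rightarrow> 'k^'n^'n \<Rightarrow> 'k^'n^'n \<Rightarrow> 'k^'n^'n \<Rightarrow> 'k^'n^'n
     \<Rightarrow> 'k^'n^'n \<Rightarrow> 'k^'n^'n \<Rightarrow> 'k^'n^'n \<Rightarrow> 'k^'n^'n \<Rightarrow> bool" where
  "U_relations q Y0p Y1p Y0m Y1m K0 K1 K0i K1i \<longleftrightarrow>
    (let yp = (\<lambda>i::nat. if i = 0 then Y0p else Y1p);
         ym = (\<lambda>i::nat. if i = 0 then Y0m else Y1m);
         k  = (\<lambda>i::nat. if i = 0 then K0 else K1);
         ki = (\<lambda>i::nat. if i = 0 then K0i else K1i);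
         I = mat 1 :: 'k^'n^'n;
         c = inverse (q - inverse q);
         gens = {Y0p, Y1p, Y0m, Y1m, K0, K1, K0i, K1i}
     in (\<forall>i\<in>{0,1}. k i ** ki i = I \<and> ki i ** k i = I)
      \<and> (\<forall>X\<in>gens. (K0 ** K1) ** X = X ** (K0 ** K1))
      \<and> (\<forall>i\<in>{0,1}. mat c ** (mat q ** (yp i ** k i) - mat (inverse q) ** (k i ** yp i)) = I)
      \<and> (\<forall>i\<in>{0,1}. mat c ** (mat q ** (k i ** ym i) - mat (inverse q) ** (ym i ** k i)) = I)
      \<and> (\<forall>i\<in>{0,1}. mat c ** (mat q ** (ym i ** yp i) - mat (inverse q) ** (yp i ** ym i)) = I)
      \<and> (\<forall>i\<in>{0,1}. \<forall>j\<in>{0,1}. i \<noteq> j \<longrightarrow>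
            mat c ** (mat q ** (yp i ** ym j) - mat (inverse q) ** (ym j ** yp i)) = K0i ** K1i)
      \<and> (\<forall>y\<in>{yp, ym}. \<forall>i\<in>{0,1}. \<forall>j\<in>{0,1}. i \<noteq> j \<longrightarrow>
            y i ** y i ** y i ** y j - mat (qint3 q) ** (y i ** y i ** y j ** y i)
            + mat (qint3 q) ** (y i ** y j ** y i ** y i) - y j ** y i ** y i ** y i = 0))"

(* A U-module is irreducible iff no subspace other than 0 and V is invariant
   under all generators (the generators generate U as an algebra). *)
definition U_irreducible ::
  "'k^'n^'n \<Rightarrow> 'k^'n^'n \<Rightarrow> 'k^'n^'n \<Rightarrow> 'k^'n^'n
     \<Rightarrow> 'k^'n^'n \<Rightarrow> 'k^'n^'n \<Rightarrow> 'k^'n^'n \<Rightarrow> 'k::field^'n^'n \<Rightarrow> bool" where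
  "U_irreducible Y0p Y1p Y0m Y1m K0 K1 K0i K1i \<longleftrightarrow>
     (\<forall>U. vec.subspace U \<and> (\<forall>X\<in>{Y0p, Y1p, Y0m, Y1m, K0, K1, K0i, K1i}. (\<lambda>v. X *v v) ` U \<subseteq> U)
          \<longrightarrow> U = {0} \<or> U = UNIV)"

definition irreducible_U_module ::
  "'k::field \<Rightarrow> 'k^'n^'n \<Rightarrow> 'k^'n^'n \<Rightarrow> 'k^'n^'n \<Rightarrow> 'k^'n^'n
     \<Rightarrow> 'k^'n^'n \<Rightarrow> 'k^'n^'n \<Rightarrow> 'k^'n^'n \<Rightarrow> 'k^'n^'n \<Rightarrow> bool" where
  "irreducible_U_module q Y0p Y1p Y0m Y1m K0 K1 K0i K1i \<longleftrightarrow>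
     U_relations q Y0p Y1p Y0m Y1m K0 K1 K0i K1i \<and> U_irreducible Y0p Y1p Y0m Y1m K0 K1 K0i K1i"

end

theory Submission
  imports Defs
begin

lemma mat_mulv: "(mat c :: 'k::field^'n^'n) *v x = c *s x"
proof -
  have "\<And>i. (\<Sum>j\<in>UNIV. (if i = j then c else 0) * x $ j) = c * x $ i"
    by (simp add: if_distrib[of "\<lambda>t. t * _"] cong: if_cong)
  then show ?thesis by (simp add: vec_eq_iff matrix_vector_mult_def mat_def)
qed

lemma matmul_v: "((M::'k::field^'n^'n) ** N) *v x = M *v (N *v x)"
  by (simp add: matrix_vector_mul_assoc)

lemma smat_v: "(mat c ** (M::'k::field^'n^'n)) *v x = c *s (M *v x)"
  by (simp add: matmul_v mat_mulv)

lemma ssum_empty[simp]: "ssum W {} = {0}"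
  by (simp add: ssum_def)

lemma ssum_subspace: "vec.subspace (ssum W I)"
  by (simp add: ssum_def vec.subspace_span)

lemma ssum_mono: "I \<subseteq> J \<Longrightarrow> ssum W I \<subseteq> ssum W J"
  unfolding ssum_def by (intro vec.span_mono) blast

lemma ssum_base: "i \<in> I \<Longrightarrow> v \<in> W i \<Longrightarrow> v \<in> ssum W I"
  unfolding ssum_def by (rule vec.span_base) blast

lemma ssum_add: "x \<in> ssum W I \<Longrightarrow> y \<in> ssum W I \<Longrightarrow> x + y \<in> ssum W I"
  unfolding ssum_def by (rule vec.span_add)

lemma ssum_diff: "x \<in> ssum W I \<Longrightarrow> y \<in> ssum W I \<Longrightarrow> x - y \<in> ssum W I"
  unfolding ssum_def by (rule vec.span_diff)

lemma ssum_scale: "x \<in> ssum W I \<Longrightarrow> c *s x \<in> ssum W I"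
  unfolding ssum_def by (rule vec.span_scale)

lemma ssum_sum: "(\<And>j. j \<in> J \<Longrightarrow> f j \<in> ssum W I) \<Longrightarrow> sum f J \<in> ssum W I"
  unfolding ssum_def by (rule vec.span_sum)

lemma ssum_map:
  assumes "\<And>i v. i \<in> I \<Longrightarrow> v \<in> W i \<Longrightarrow> M *v v \<in> T" "vec.subspace T" "x \<in> ssum W I"
  shows "M *v x \<in> T"
proof -
  have "ssum W I \<subseteq> {x. M *v x \<in> T}"
    unfolding ssum_def
  proof (rule vec.span_minimal)
    show "vec.subspace {x. M *v x \<in> T}"
      using assms(2) unfolding vec.subspace_def
      by (simp add: matrix_vector_right_distrib vector_scalar_commute)
  qed (use assms(1) in auto)
  then show ?thesis using assms(3) by auto
qed

lemma eigenspace_subspace: "vec.subspace (eigenspace (M::'k::field^'n^'n) t)"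
  unfolding vec.subspace_def eigenspace_def
  by (auto simp: matrix_vector_right_distrib vector_scalar_commute vector_add_ldistrib vector_smult_assoc mult.commute)

lemma span_mat_eq:
  fixes M N :: "'k::field^'n^'n"
  assumes "vec.span S = UNIV" "\<And>v. v \<in> S \<Longrightarrow> M *v v = N *v v"
  shows "M = N"
proof -
  have "vec.span S \<subseteq> {x. (M - N) *v x = 0}"
  proof (rule vec.span_minimal)
    show "vec.subspace {x. (M - N) *v x = 0}"
      unfolding vec.subspace_def
      by (simp add: matrix_vector_right_distrib vector_scalar_commute)
  qed (use assms(2) in \<open>auto simp: matrix_vector_mult_diff_rdistrib\<close>)
  then show ?thesis using assms(1) by (auto simp: matrix_eq matrix_vector_mult_diff_rdistrib)
qed

lemma decomp_zero:
  assumes "decomposition Z d" "\<forall>j\<le>d. w j \<in> Z j" "(\<Sum>j\<le>d. w j) = 0" "j \<le> d"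
  shows "w j = 0"
  using assms unfolding decomposition_def by blast

lemma decomp_span:
  assumes "decomposition Z d"
  shows "vec.span (\<Union>i\<le>d. Z i) = UNIV"
proof -
  { fix v
    obtain w where w: "\<forall>i\<le>d. w i \<in> Z i" "v = (\<Sum>i\<le>d. w i)"
      using assms unfolding decomposition_def by blast
    have "v \<in> vec.span (\<Union>i\<le>d. Z i)"
      unfolding w(2) by (rule vec.span_sum) (use w(1) in \<open>auto intro: vec.span_base\<close>) }
  then show ?thesis by auto
qed

lemma decomp_mat_eq:
  fixes M N :: "'k::field^'n^'n"
  assumes "decomposition Z d" "\<And>i v. i \<le> d \<Longrightarrow> v \<in> Z i \<Longrightarrow> M *v v = N *v v"
  shows "M = N"
  by (rule span_mat_eq[OF decomp_span[OF assms(1)]]) (use assms(2) in auto)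

lemma decomp_subspace: "decomposition Z d \<Longrightarrow> i \<le> d \<Longrightarrow> vec.subspace (Z i)"
  unfolding decomposition_def by simp

lemma decomp_partial_zero:
  assumes dec: "decomposition Z d" and S: "S \<subseteq> {..d}" and w: "\<forall>j\<in>S. w j \<in> Z j"
    and s0: "(\<Sum>j\<in>S. w j) = 0" and j: "j \<in> S"
  shows "w j = 0"
proof -
  define w' where "w' j = (if j \<in> S then w j else 0)" for j
  have "\<forall>j\<le>d. w' j \<in> Z j"
  proof (intro allI impI)
    fix k assume k: "k \<le> d"
    show "w' k \<in> Z k"
    proof (cases "k \<in> S")
      case True then show ?thesis using w by (simp add: w'_def)
    next
      case False then show ?thesis using decomp_subspace[OF dec k] by (simp add: w'_def vec.subspace_0)
    qed
  qed
  moreover have "(\<Sum>j\<le>d. w' j) = 0"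
  proof -
    have "(\<Sum>j\<le>d. w' j) = (\<Sum>j\<in>S. w' j)"
      by (rule sum.mono_neutral_right) (use S in \<open>auto simp: w'_def\<close>)
    also have "\<dots> = (\<Sum>j\<in>S. w j)" by (rule sum.cong) (auto simp: w'_def)
    finally show ?thesis using s0 by simp
  qed
  ultimately have "w' j = 0" using decomp_zero[OF dec, of w' j] j S by blast
  then show ?thesis using j unfolding w'_def by simp
qed
lemma decomp_adjacent:
  assumes dec: "decomposition Z d" and id: "Suc i \<le> d" and y1: "y \<in> Z i" and y2: "y \<in> Z (Suc i)"
  shows "y = 0"
proof -
  define w where "w j = (if j = i then y else if j = Suc i then -y else 0)" for j
  have m: "-y \<in> Z (Suc i)" using decomp_subspace[OF dec id] y2 by (rule vec.subspace_neg)
  have "\<forall>j\<in>{i, Suc i}. w j \<in> Z j"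
    using y1 m unfolding w_def by auto
  moreover have "(\<Sum>j\<in>{i, Suc i}. w j) = 0" unfolding w_def by simp
  moreover have "{i, Suc i} \<subseteq> {..d}" using id by auto
  ultimately have "w i = 0"
    by (intro decomp_partial_zero[OF dec, of "{i, Suc i}" w i]) auto
  then show ?thesis unfolding w_def by simp
qed

locale flagdec =
  fixes Z P Q :: "nat \<Rightarrow> ('k::field^'n) set" and d :: nat
  assumes dec: "decomposition Z d"
    and ZPQ: "\<And>i. i \<le> d \<Longrightarrow> Z i = P i \<inter> Q i"
    and Pmono: "\<And>i j. i \<le> j \<Longrightarrow> j \<le> d \<Longrightarrow> P i \<subseteq> P j"
    and Qanti: "\<And>i j. i \<le> j \<Longrightarrow> j \<le> d \<Longrightarrow> Q j \<subseteq> Q i"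
    and Psub: "\<And>i. i \<le> d \<Longrightarrow> vec.subspace (P i)"
    and Qsub: "\<And>i. i \<le> d \<Longrightarrow> vec.subspace (Q i)"
begin

lemma wP: "\<forall>j\<le>d. w j \<in> Z j \<Longrightarrow> j \<le> i \<Longrightarrow> i \<le> d \<Longrightarrow> w j \<in> P i"
proof -
  assume w: "\<forall>j\<le>d. w j \<in> Z j" and ji: "j \<le> i" and id: "i \<le> d"
  have jd: "j \<le> d" using ji id by (rule order.trans)
  have "w j \<in> Z j" using w jd by blast
  then have "w j \<in> P j" using ZPQ[OF jd] by blast
  then show "w j \<in> P i" using Pmono[OF ji id] by blast
qed

lemma wQ: "\<forall>j\<le>d. w j \<in> Z j \<Longrightarrow> i \<le> j \<Longrightarrow> j \<le> d \<Longrightarrow> w j \<in> Q i"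
proof -
  assume w: "\<forall>j\<le>d. w j \<in> Z j" and ij: "i \<le> j" and jd: "j \<le> d"
  have "w j \<in> Z j" using w jd by blast
  then have "w j \<in> Q j" using ZPQ[OF jd] by blast
  then show "w j \<in> Q i" using Qanti[OF ij jd] by blast
qed

lemma upper:
  assumes i: "i \<le> d" and x: "x \<in> P i" and w: "\<forall>j\<le>d. w j \<in> Z j" and xw: "x = (\<Sum>j\<le>d. w j)"
    and j: "i < j" "j \<le> d"
  shows "w j = 0"
proof -
  have id: "Suc i \<le> d" using j by simp
  define y where "y = (\<Sum>j\<in>{i<..d}. w j)"
  have split: "{..d} = {..i} \<union> {i<..d}" using i by auto
  have "x = (\<Sum>j\<le>i. w j) + y"
    unfolding xw y_def split by (subst sum.union_disjoint) auto
  then have yx: "y = x - (\<Sum>j\<le>i. w j)" by simp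
  have "(\<Sum>j\<le>i. w j) \<in> P i"
    by (rule vec.subspace_sum[OF Psub[OF i]]) (use wP[OF w _ i] in simp)
  then have yP: "y \<in> P i" using yx x Psub[OF i] by (simp add: vec.subspace_diff)
  have yQ: "y \<in> Q (Suc i)"
    unfolding y_def
    by (rule vec.subspace_sum[OF Qsub[OF id]]) (use wQ[OF w] in simp)
  have "y \<in> Z i" using yP yQ ZPQ[OF i] Qanti[OF _ id, of i] by auto
  moreover have "y \<in> Z (Suc i)" using yP yQ ZPQ[OF id] Pmono[OF _ id, of i] by auto
  ultimately have y0: "y = 0" using decomp_adjacent[OF dec id] by blast
  have S: "{i<..d} \<subseteq> {..d}" by auto
  have "\<forall>j\<in>{i<..d}. w j \<in> Z j" using w by simp
  from decomp_partial_zero[OF dec S this] show ?thesis using y0 j unfolding y_def by simp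
qed

lemma lower:
  assumes i: "i \<le> d" and x: "x \<in> Q i" and w: "\<forall>j\<le>d. w j \<in> Z j" and xw: "x = (\<Sum>j\<le>d. w j)"
    and j: "j < i"
  shows "w j = 0"
proof -
  obtain k where k: "i = Suc k" using j by (cases i) auto
  have kd: "k \<le> d" using i k by simp
  define y where "y = (\<Sum>j\<in>{..k}. w j)"
  have split: "{..d} = {..k} \<union> {i..d}" using i k by auto
  have "x = y + (\<Sum>j\<in>{i..d}. w j)"
    unfolding xw y_def split by (subst sum.union_disjoint) (use k in auto)
  then have yx: "y = x - (\<Sum>j\<in>{i..d}. w j)" by simp
  have "(\<Sum>j\<in>{i..d}. w j) \<in> Q i"
    by (rule vec.subspace_sum[OF Qsub[OF i]]) (use wQ[OF w] in simp)
  then have yQ: "y \<in> Q i" using yx x Qsub[OF i] by (simp add: vec.subspace_diff)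
  have yP: "y \<in> P k"
    unfolding y_def
    by (rule vec.subspace_sum[OF Psub[OF kd]]) (use wP[OF w _ kd] in simp)
  have "y \<in> Z k" using yP yQ ZPQ[OF kd] Qanti[OF _ i, of k] k by auto
  moreover have "y \<in> Z (Suc k)" using yP yQ ZPQ[OF i] Pmono[OF _ i, of k] k by auto
  ultimately have y0: "y = 0" using decomp_adjacent[OF dec] i k by blast
  have S: "{..k} \<subseteq> {..d}" using kd by auto
  have "\<forall>j\<in>{..k}. w j \<in> Z j" using w kd by simp
  from decomp_partial_zero[OF dec S this] show ?thesis using y0 j k unfolding y_def by simp
qed

end

definition vrel :: "'k::field \<Rightarrow> 'k^'n^'n \<Rightarrow> 'k^'n^'n \<Rightarrow> bool" where
  "vrel q P Q \<longleftrightarrow> mat q ** (P ** Q) - mat (inverse q) ** (Q ** P) = mat (q - inverse q)"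

lemma relv_expand:
  "(mat q ** (P ** Q) - mat (inverse q) ** (Q ** P)) *v v
     = q *s (P *v (Q *v v)) - inverse q *s (Q *v (P *v v))" for P Q :: "'k::field^'n^'n"
  by (simp add: matrix_vector_mult_diff_rdistrib smat_v matmul_v mat_mulv)

lemma vrel_apply:
  "vrel q P Q \<Longrightarrow> q *s (P *v (Q *v v)) - inverse q *s (Q *v (P *v v)) = (q - inverse q) *s v"
  unfolding vrel_def by (metis relv_expand mat_mulv)

lemma vrel_decomp:
  fixes P Q :: "'k::field^'n^'n"
  assumes "decomposition Z d"
    "\<And>i v. i \<le> d \<Longrightarrow> v \<in> Z i \<Longrightarrow> q *s (P *v (Q *v v)) - inverse q *s (Q *v (P *v v)) = (q - inverse q) *s v"
  shows "vrel q P Q"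
  unfolding vrel_def
  by (rule decomp_mat_eq[OF assms(1)]) (simp add: relv_expand mat_mulv assms(2))

lemma mat_mat: "(mat a :: 'k::field^'n^'n) ** mat b = mat (a * b)"
  by (simp add: matrix_eq matmul_v mat_mulv vector_smult_assoc)

lemma vrel_U:
  fixes P Q :: "'k::field^'n^'n"
  assumes "vrel q P Q" "q - inverse q \<noteq> 0"
  shows "mat (inverse (q - inverse q)) ** (mat q ** (P ** Q) - mat (inverse q) ** (Q ** P)) = mat 1"
  using assms unfolding vrel_def by (simp add: mat_mat)

lemma e_rw:
  fixes q :: "'k::field"
  assumes "q \<noteq> 0"
  shows "q powi (-m) = inverse (q powi m)" "q powi (m + 2) = q^2 * q powi m"
    "q powi (m - 2) = q powi m / q^2" "q powi m \<noteq> 0"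
  using assms by (auto simp: power_int_add power_int_diff power_int_minus field_simps)

lemma vec_rel1:
  fixes P Q :: "'k::field^'n^'n"
  assumes q: "q \<noteq> 0" and Qv: "Q *v v = q powi m *s v"
    and Qw: "Q *v (P *v v - q powi (-m) *s v) = q powi (m+2) *s (P *v v - q powi (-m) *s v)"
  shows "q *s (P *v (Q *v v)) - inverse q *s (Q *v (P *v v)) = (q - inverse q) *s v"
proof -
  define E where "E = q powi m"
  have E: "E \<noteq> 0" unfolding E_def using e_rw[OF q] by simp
  define X where "X = P *v v"
  define Y where "Y = Q *v (P *v v)"
  have h1: "Y - inverse E *s (E *s v) = (q^2 * E) *s (X - inverse E *s v)"
    using Qw unfolding X_def Y_def E_def e_rw[OF q]
    by (simp add: matrix_vector_mult_diff_distrib vector_scalar_commute Qv)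
  have h2: "P *v (Q *v v) = E *s X"
    unfolding Qv X_def E_def by (simp add: vector_scalar_commute)
  show ?thesis
    unfolding h2 Y_def[symmetric]
  proof (subst vec_eq_iff, intro allI)
    fix i
    have "Y$i - v$i = q^2 * E * X$i - q^2 * v$i"
      using arg_cong[OF h1, of "\<lambda>z. z$i"] E by (simp add: field_simps)
    then show "(q *s (E *s X) - inverse q *s Y) $ i = ((q - inverse q) *s v) $ i"
      using q E by (simp add: field_simps power2_eq_square)
  qed
qed

lemma vec_rel2:
  fixes P Q :: "'k::field^'n^'n"
  assumes q: "q \<noteq> 0" and Pv: "P *v v = q powi m *s v"
    and Pw: "P *v (Q *v v - q powi (-m) *s v) = q powi (m-2) *s (Q *v v - q powi (-m) *s v)"
  shows "q *s (P *v (Q *v v)) - inverse q *s (Q *v (P *v v)) = (q - inverse q) *s v"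
proof -
  define E where "E = q powi m"
  have E: "E \<noteq> 0" unfolding E_def using e_rw[OF q] by simp
  define X where "X = Q *v v"
  define Y where "Y = P *v (Q *v v)"
  have h1: "Y - inverse E *s (E *s v) = (E / q^2) *s (X - inverse E *s v)"
    using Pw unfolding X_def Y_def E_def e_rw[OF q]
    by (simp add: matrix_vector_mult_diff_distrib vector_scalar_commute Pv)
  have h2: "Q *v (P *v v) = E *s X"
    unfolding Pv X_def E_def by (simp add: vector_scalar_commute)
  show ?thesis
    unfolding h2 Y_def[symmetric]
  proof (subst vec_eq_iff, intro allI)
    fix i
    have "q^2 * (Y$i - v$i) = E * X$i - v$i"
      using arg_cong[OF h1, of "\<lambda>z. z$i"] E q by (simp add: field_simps)
    then show "(q *s Y - inverse q *s (E *s X)) $ i = ((q - inverse q) *s v) $ i"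
      using q E by (simp add: field_simps power2_eq_square)
  qed
qed

lemma shiftL:
  fixes P Q :: "'k::field^'n^'n"
  assumes q: "q \<noteq> 0" and R: "vrel q P Q" and Pv: "P *v v = q powi m *s v"
  shows "P *v (Q *v v - q powi (-m) *s v) = q powi (m-2) *s (Q *v v - q powi (-m) *s v)"
proof -
  define E where "E = q powi m"
  have E: "E \<noteq> 0" unfolding E_def using e_rw[OF q] by simp
  define X where "X = Q *v v"
  define Y where "Y = P *v (Q *v v)"
  have r: "q *s Y - inverse q *s (E *s X) = (q - inverse q) *s v"
    using vrel_apply[OF R, of v] Pv unfolding X_def Y_def E_def by (simp add: vector_scalar_commute)
  have L: "P *v (Q *v v - q powi (-m) *s v) = Y - inverse E *s (E *s v)"
    by (simp add: Y_def E_def e_rw[OF q] matrix_vector_mult_diff_distrib vector_scalar_commute Pv)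
  have Rr: "q powi (m-2) *s (Q *v v - q powi (-m) *s v) = (E / q^2) *s (X - inverse E *s v)"
    by (simp add: X_def E_def e_rw[OF q])
  show ?thesis
    unfolding L Rr
  proof (subst vec_eq_iff, intro allI)
    fix i
    have "q * Y$i - inverse q * (E * X$i) = (q - inverse q) * v$i"
      using arg_cong[OF r, of "\<lambda>z. z$i"] by (simp add: algebra_simps)
    then show "(Y - inverse E *s (E *s v)) $ i = ((E / q^2) *s (X - inverse E *s v)) $ i"
      using q E by (simp add: field_simps power2_eq_square)
  qed
qed

lemma shiftR:
  fixes P Q :: "'k::field^'n^'n"
  assumes q: "q \<noteq> 0" and R: "vrel q P Q" and Qv: "Q *v v = q powi m *s v"
  shows "Q *v (P *v v - q powi (-m) *s v) = q powi (m+2) *s (P *v v - q powi (-m) *s v)"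
proof -
  define E where "E = q powi m"
  have E: "E \<noteq> 0" unfolding E_def using e_rw[OF q] by simp
  define X where "X = P *v v"
  define Y where "Y = Q *v (P *v v)"
  have r: "q *s (E *s X) - inverse q *s Y = (q - inverse q) *s v"
    using vrel_apply[OF R, of v] Qv unfolding X_def Y_def E_def by (simp add: vector_scalar_commute)
  have L: "Q *v (P *v v - q powi (-m) *s v) = Y - inverse E *s (E *s v)"
    by (simp add: Y_def E_def e_rw[OF q] matrix_vector_mult_diff_distrib vector_scalar_commute Qv)
  have Rr: "q powi (m+2) *s (P *v v - q powi (-m) *s v) = (q^2 * E) *s (X - inverse E *s v)"
    by (simp add: X_def E_def e_rw[OF q])
  show ?thesis
    unfolding L Rr
  proof (subst vec_eq_iff, intro allI)
    fix i
    have "q * (E * X$i) - inverse q * Y$i = (q - inverse q) * v$i"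
      using arg_cong[OF r, of "\<lambda>z. z$i"] by (simp add: algebra_simps)
    then show "(Y - inverse E *s (E *s v)) $ i = ((q^2 * E) *s (X - inverse E *s v)) $ i"
      using q E by (simp add: field_simps power2_eq_square)
  qed
qed

lemma qint3_eq:
  fixes q :: "'k::field"
  assumes q: "q \<noteq> 0" and q2: "q^2 \<noteq> 1"
  shows "qint3 q = q^2 + 1 + inverse (q^2)"
proof -
  have "q - inverse q \<noteq> 0"
  proof
    assume "q - inverse q = 0"
    then have "q * q = q * inverse q" by simp
    then have "q^2 = 1" using q by (simp add: power2_eq_square)
    then show False using q2 by simp
  qed
  then show ?thesis unfolding qint3_def using q
    by (simp add: field_simps power2_eq_square power3_eq_cube)
qed

lemma serre_poly:
  fixes q l m c :: "'k::field"
  assumes q: "q \<noteq> 0" and c: "c = q^2 + 1 + inverse (q^2)"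
    and m: "m = l \<or> m = q^2 * l \<or> m = l / q^2"
  shows "m^3 - c*l*m^2 + c*l^2*m - l^3 = 0"
  using m
proof (elim disjE)
  assume "m = l" then show ?thesis by (simp add: algebra_simps power2_eq_square power3_eq_cube)
next
  assume "m = q^2 * l" then show ?thesis unfolding c using q
    by (simp add: field_simps power2_eq_square power3_eq_cube)
next
  assume "m = l / q^2"
  then have l: "l = q^2 * m" using q by (simp add: field_simps)
  show ?thesis unfolding c l using q
    by (simp add: field_simps power2_eq_square power3_eq_cube)
qed

lemma serre_vec:
  fixes Dg T :: "'k::field^'n^'n"
  assumes q: "q \<noteq> 0" and q2: "q^2 \<noteq> 1" and Dv: "Dg *v v = l *s v"
    and S: "T *v v \<in> vec.span S"
    and Sev: "\<And>u. u \<in> S \<Longrightarrow> \<exists>m. Dg *v u = m *s u \<and> (m = l \<or> m = q^2 * l \<or> m = l / q^2)"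
  shows "(Dg ** Dg ** Dg ** T - mat (qint3 q) ** (Dg ** Dg ** T ** Dg)
          + mat (qint3 q) ** (Dg ** T ** Dg ** Dg) - T ** Dg ** Dg ** Dg) *v v = 0"
proof -
  define c where "c = qint3 q"
  have c: "c = q^2 + 1 + inverse (q^2)" unfolding c_def by (rule qint3_eq[OF q q2])
  define N where "N = Dg ** Dg ** Dg - mat (c*l) ** (Dg ** Dg) + mat (c*l^2) ** Dg - mat (l^3)"
  have Nu: "N *v u = Dg *v (Dg *v (Dg *v u)) - (c*l) *s (Dg *v (Dg *v u)) + (c*l^2) *s (Dg *v u) - l^3 *s u" for u
    unfolding N_def
    by (simp add: matrix_vector_mult_diff_rdistrib matrix_vector_mult_add_rdistrib matmul_v smat_v mat_mulv)
  have lhs: "(Dg ** Dg ** Dg ** T - mat c ** (Dg ** Dg ** T ** Dg)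
          + mat c ** (Dg ** T ** Dg ** Dg) - T ** Dg ** Dg ** Dg) *v v = N *v (T *v v)"
    unfolding Nu
    by (simp add: matrix_vector_mult_diff_rdistrib matrix_vector_mult_add_rdistrib matmul_v smat_v
        Dv mat_mulv vector_scalar_commute vector_smult_assoc power2_eq_square power3_eq_cube mult_ac)
  have "vec.span S \<subseteq> {u. N *v u = 0}"
  proof (rule vec.span_minimal)
    show "vec.subspace {u. N *v u = 0}"
      unfolding vec.subspace_def by (simp add: matrix_vector_right_distrib vector_scalar_commute)
    show "S \<subseteq> {u. N *v u = 0}"
    proof
      fix u assume u: "u \<in> S"
      obtain m where m: "Dg *v u = m *s u" "m = l \<or> m = q^2 * l \<or> m = l / q^2" using Sev[OF u] by blast
      have "N *v u = (m^3 - c*l*m^2 + c*l^2*m - l^3) *s u"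
        unfolding Nu m(1) by (simp add: vector_scalar_commute m(1) vec_eq_iff algebra_simps power2_eq_square power3_eq_cube)
      then show "u \<in> {u. N *v u = 0}" using serre_poly[OF q c m(2)] by simp
    qed
  qed
  then show ?thesis using lhs S unfolding c_def by auto
qed

locale TDs =
  fixes q a as b bs :: "'k::field"
    and A As B Bs Ks :: "'k^'n^'n"
    and Vs Vss :: "nat \<Rightarrow> ('k^'n) set"
    and d :: nat
  assumes q_nz: "q \<noteq> 0"
    and q_not_root: "\<forall>m::nat. m > 0 \<longrightarrow> q ^ m \<noteq> 1"
    and nz: "a \<noteq> 0" "as \<noteq> 0" "b \<noteq> 0" "bs \<noteq> 0"
    and TD: "tridiagonal_pair A As"
    and Vord: "eigenspace_ordering A Vs d" "tridiag_ordering As Vs d"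
    and Vsord: "eigenspace_ordering As Vss d" "tridiag_ordering A Vss d"
    and evA: "\<forall>i\<le>d. Vs i = eigenspace A (a * q powi (2 * int i - int d))"
    and evAs: "\<forall>i\<le>d. Vss i = eigenspace As (as * q powi (int d - 2 * int i))"
    and dec1: "decomposition (\<lambda>i. ssum Vss {0..i} \<inter> ssum Vs {0..d - i}) d"
    and dec2: "decomposition (\<lambda>i. ssum Vss {d - i..d} \<inter> ssum Vs {i..d}) d"
    and dec3: "decomposition (\<lambda>i. ssum Vss {d - i..d} \<inter> ssum Vs {0..d - i}) d"
    and B_def: "\<forall>i\<le>d. \<forall>v \<in> ssum Vss {0..i} \<inter> ssum Vs {0..d - i}.
                  B *v v = (b * q powi (2 * int i - int d)) *s v"
    and Bs_def: "\<forall>i\<le>d. \<forall>v \<in> ssum Vss {d - i..d} \<inter> ssum Vs {i..d}.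
                  Bs *v v = (bs * q powi (int d - 2 * int i)) *s v"
    and Ks_def: "\<forall>i\<le>d. \<forall>v \<in> ssum Vss {d - i..d} \<inter> ssum Vs {0..d - i}.
                  Ks *v v = (q powi (2 * int i - int d)) *s v"
begin

definition "x0 = mat (inverse a) ** A"
definition "x1 = mat (inverse as) ** As"
definition "z0 = mat (inverse bs) ** Bs"
definition "z1 = mat (inverse b) ** B"
definition "Ki = matrix_inv Ks"
definition "L j = ssum Vs {0..j}"
definition "H j = ssum Vs {j..d}"
definition "Ls j = ssum Vss {0..j}"
definition "Hs j = ssum Vss {j..d}"
definition "Y i = Ls i \<inter> L (d - i)"
definition "W i = Hs (d - i) \<inter> H i"
definition "U i = Hs (d - i) \<inter> L (d - i)"

lemma q2: "q^2 \<noteq> 1" using q_not_root by auto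

lemma qq: "q - inverse q \<noteq> 0"
proof
  assume "q - inverse q = 0"
  then have "q * q = q * inverse q" by simp
  then have "q^2 = 1" using q_nz by (simp add: power2_eq_square)
  then show False using q2 by simp
qed

lemma decY: "decomposition Y d" using dec1 unfolding Y_def Ls_def L_def by simp
lemma decW: "decomposition W d" using dec2 unfolding W_def Hs_def H_def by simp
lemma decU: "decomposition U d" using dec3 unfolding U_def Hs_def L_def by simp

lemma subsp: "vec.subspace (L j)" "vec.subspace (H j)" "vec.subspace (Ls j)" "vec.subspace (Hs j)"
  unfolding L_def H_def Ls_def Hs_def by (simp_all add: ssum_subspace)

lemma flY: "flagdec Y Ls (\<lambda>i. L (d - i)) d"
  by unfold_locales (auto simp: decY Y_def ssum_subspace L_def Ls_def intro!: ssum_mono)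

lemma flW: "flagdec W (\<lambda>i. Hs (d - i)) H d"
  by unfold_locales (auto simp: decW W_def ssum_subspace H_def Hs_def intro!: ssum_mono)

lemma flU: "flagdec U (\<lambda>i. Hs (d - i)) (\<lambda>i. L (d - i)) d"
  by unfold_locales (auto simp: decU U_def ssum_subspace L_def Hs_def intro!: ssum_mono)

lemma x0_V: "k \<le> d \<Longrightarrow> v \<in> Vs k \<Longrightarrow> x0 *v v = q powi (2 * int k - int d) *s v"
  using evA nz(1) unfolding x0_def eigenspace_def by (auto simp: smat_v vector_smult_assoc)

lemma V_of_x0: "k \<le> d \<Longrightarrow> x0 *v v = q powi (2 * int k - int d) *s v \<Longrightarrow> v \<in> Vs k"
proof -
  assume k: "k \<le> d" and h: "x0 *v v = q powi (2 * int k - int d) *s v"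
  have "A *v v = a *s (x0 *v v)" using nz(1) unfolding x0_def by (simp add: smat_v vector_smult_assoc)
  then have "A *v v = (a * q powi (2 * int k - int d)) *s v" using h by (simp add: vector_smult_assoc)
  then show ?thesis using evA k unfolding eigenspace_def by auto
qed

lemma x1_V: "k \<le> d \<Longrightarrow> v \<in> Vss k \<Longrightarrow> x1 *v v = q powi (int d - 2 * int k) *s v"
  using evAs nz(2) unfolding x1_def eigenspace_def by (auto simp: smat_v vector_smult_assoc)

lemma V_of_x1: "k \<le> d \<Longrightarrow> x1 *v v = q powi (int d - 2 * int k) *s v \<Longrightarrow> v \<in> Vss k"
proof -
  assume k: "k \<le> d" and h: "x1 *v v = q powi (int d - 2 * int k) *s v"
  have "As *v v = as *s (x1 *v v)" using nz(2) unfolding x1_def by (simp add: smat_v vector_smult_assoc)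
  then have "As *v v = (as * q powi (int d - 2 * int k)) *s v" using h by (simp add: vector_smult_assoc)
  then show ?thesis using evAs k unfolding eigenspace_def by auto
qed

lemma Vs_sub: "k \<le> d \<Longrightarrow> vec.subspace (Vs k)" using evA eigenspace_subspace by metis
lemma Vss_sub: "k \<le> d \<Longrightarrow> vec.subspace (Vss k)" using evAs eigenspace_subspace by metis

lemma z1_Y: "i \<le> d \<Longrightarrow> v \<in> Y i \<Longrightarrow> z1 *v v = q powi (2 * int i - int d) *s v"
  using B_def nz(3) unfolding z1_def Y_def Ls_def L_def by (auto simp: smat_v vector_smult_assoc)

lemma z0_W: "i \<le> d \<Longrightarrow> v \<in> W i \<Longrightarrow> z0 *v v = q powi (int d - 2 * int i) *s v"
  using Bs_def nz(4) unfolding z0_def W_def Hs_def H_def by (auto simp: smat_v vector_smult_assoc)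

lemma K_U: "i \<le> d \<Longrightarrow> v \<in> U i \<Longrightarrow> Ks *v v = q powi (2 * int i - int d) *s v"
  using Ks_def unfolding U_def Hs_def L_def by auto

end

lemma diag_flag:
  fixes M :: "'k::field^'n^'n"
  assumes Mf: "\<And>k v. k \<in> I \<Longrightarrow> v \<in> Z k \<Longrightarrow> M *v v = f k *s v" and x: "x \<in> ssum Z I"
  shows "M *v x - f j *s x \<in> ssum Z (I - {j})"
proof -
  have "(M - mat (f j)) *v x \<in> ssum Z (I - {j})"
  proof (rule ssum_map[OF _ ssum_subspace x])
    fix k v assume k: "k \<in> I" and v: "v \<in> Z k"
    show "(M - mat (f j)) *v v \<in> ssum Z (I - {j})"
    proof (cases "k = j")
      case True then show ?thesis
        using Mf[OF k v] by (simp add: matrix_vector_mult_diff_rdistrib mat_mulv ssum_def vec.span_zero)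
    next
      case False
      then have "v \<in> ssum Z (I - {j})" using k v by (intro ssum_base) auto
      then have "(f k - f j) *s v \<in> ssum Z (I - {j})" by (rule ssum_scale)
      then show ?thesis using Mf[OF k v]
        by (simp add: matrix_vector_mult_diff_rdistrib mat_mulv vector_sub_rdistrib)
    qed
  qed
  then show ?thesis by (simp add: matrix_vector_mult_diff_rdistrib mat_mulv)
qed

lemma tri_flag:
  fixes T :: "'k::field^'n^'n"
  assumes tri: "tridiag_ordering T Z d" and I: "I \<subseteq> {0..d}" and x: "x \<in> ssum Z I"
    and J: "\<And>k. k \<in> I \<Longrightarrow> {k - 1, k, k + 1} \<inter> {0..d} \<subseteq> J"
  shows "T *v x \<in> ssum Z J"
proof (rule ssum_map[OF _ ssum_subspace x])
  fix k v assume k: "k \<in> I" and v: "v \<in> Z k"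
  have kd: "k \<le> d" using k I by auto
  have "(\<lambda>v. T *v v) ` Z k \<subseteq> ssum Z ({k - 1, k, k + 1} \<inter> {0..d})"
    using tri kd unfolding tridiag_ordering_def by blast
  then have "T *v v \<in> ssum Z ({k - 1, k, k + 1} \<inter> {0..d})"
    using v by blast
  then show "T *v v \<in> ssum Z J" using ssum_mono[OF J[OF k]] by blast
qed

context TDs begin

lemma x0_scale: "x0 *v x = inverse a *s (A *v x)" unfolding x0_def by (simp add: smat_v)
lemma x1_scale: "x1 *v x = inverse as *s (As *v x)" unfolding x1_def by (simp add: smat_v)

lemma F1: "j \<le> d \<Longrightarrow> x \<in> Hs j \<Longrightarrow> x0 *v x \<in> Hs (j - 1)"
  unfolding x0_scale Hs_def
  by (rule ssum_scale, rule tri_flag[OF Vsord(2), of "{j..d}"]) auto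

lemma F2: "j < d \<Longrightarrow> x \<in> Ls j \<Longrightarrow> x0 *v x \<in> Ls (Suc j)"
  unfolding x0_scale Ls_def
  by (rule ssum_scale, rule tri_flag[OF Vsord(2), of "{0..j}"]) auto

lemma F5: "j < d \<Longrightarrow> x \<in> L j \<Longrightarrow> x1 *v x \<in> L (Suc j)"
  unfolding x1_scale L_def
  by (rule ssum_scale, rule tri_flag[OF Vord(2), of "{0..j}"]) auto

lemma F6: "j \<le> d \<Longrightarrow> x \<in> H j \<Longrightarrow> x1 *v x \<in> H (j - 1)"
  unfolding x1_scale H_def
  by (rule ssum_scale, rule tri_flag[OF Vord(2), of "{j..d}"]) auto

lemma F3: "j \<le> d \<Longrightarrow> x \<in> L j \<Longrightarrow> x0 *v x - q powi (2 * int j - int d) *s x \<in> ssum Vs {0..<j}"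
proof -
  assume j: "j \<le> d" and x: "x \<in> L j"
  have "x0 *v x - q powi (2 * int j - int d) *s x \<in> ssum Vs ({0..j} - {j})"
    by (rule diag_flag[where f="\<lambda>k. q powi (2 * int k - int d)"]) (use x j x0_V in \<open>auto simp: L_def\<close>)
  moreover have "{0..j} - {j} = {0..<j}" by auto
  ultimately show ?thesis by simp
qed

lemma F4: "j \<le> d \<Longrightarrow> x \<in> H j \<Longrightarrow> x0 *v x - q powi (2 * int j - int d) *s x \<in> ssum Vs {j<..d}"
proof -
  assume j: "j \<le> d" and x: "x \<in> H j"
  have "x0 *v x - q powi (2 * int j - int d) *s x \<in> ssum Vs ({j..d} - {j})"
    by (rule diag_flag[where f="\<lambda>k. q powi (2 * int k - int d)"]) (use x j x0_V in \<open>auto simp: H_def\<close>)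
  moreover have "{j..d} - {j} = {j<..d}" by auto
  ultimately show ?thesis by simp
qed

lemma F7: "j \<le> d \<Longrightarrow> x \<in> Ls j \<Longrightarrow> x1 *v x - q powi (int d - 2 * int j) *s x \<in> ssum Vss {0..<j}"
proof -
  assume j: "j \<le> d" and x: "x \<in> Ls j"
  have "x1 *v x - q powi (int d - 2 * int j) *s x \<in> ssum Vss ({0..j} - {j})"
    by (rule diag_flag[where f="\<lambda>k. q powi (int d - 2 * int k)"]) (use x j x1_V in \<open>auto simp: Ls_def\<close>)
  moreover have "{0..j} - {j} = {0..<j}" by auto
  ultimately show ?thesis by simp
qed

lemma F8: "j \<le> d \<Longrightarrow> x \<in> Hs j \<Longrightarrow> x1 *v x - q powi (int d - 2 * int j) *s x \<in> ssum Vss {j<..d}"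
proof -
  assume j: "j \<le> d" and x: "x \<in> Hs j"
  have "x1 *v x - q powi (int d - 2 * int j) *s x \<in> ssum Vss ({j..d} - {j})"
    by (rule diag_flag[where f="\<lambda>k. q powi (int d - 2 * int k)"]) (use x j x1_V in \<open>auto simp: Hs_def\<close>)
  moreover have "{j..d} - {j} = {j<..d}" by auto
  ultimately show ?thesis by simp
qed

end

lemma matv_sum: "(M::'k::field^'n^'n) *v (\<Sum>i\<in>S. f i) = (\<Sum>i\<in>S. M *v f i)"
  by (induct S rule: infinite_finite_induct) (simp_all add: matrix_vector_right_distrib)

lemma diag_expand:
  fixes M :: "'k::field^'n^'n"
  assumes "\<And>j v. j \<le> d \<Longrightarrow> v \<in> Z j \<Longrightarrow> M *v v = f j *s v" "\<forall>j\<le>d. u j \<in> Z j"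
  shows "M *v (\<Sum>j\<le>d. u j) - c *s (\<Sum>j\<le>d. u j) = (\<Sum>j\<le>d. (f j - c) *s u j)"
proof -
  have "M *v (\<Sum>j\<le>d. u j) = (\<Sum>j\<le>d. f j *s u j)"
    unfolding matv_sum using assms by (intro sum.cong) auto
  then show ?thesis
    by (simp add: vec.scale_sum_right vector_sub_rdistrib sum_subtractf)
qed

context TDs begin

lemma K_inj: "Ks *v x = 0 \<Longrightarrow> x = 0"
proof -
  assume K0: "Ks *v x = 0"
  obtain u where u: "\<forall>j\<le>d. u j \<in> U j" "x = (\<Sum>j\<le>d. u j)"
    using decU unfolding decomposition_def by blast
  have "Ks *v x - 0 *s x = (\<Sum>j\<le>d. (q powi (2 * int j - int d) - 0) *s u j)"
    unfolding u(2) by (rule diag_expand[OF K_U u(1)]) auto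
  then have s: "(\<Sum>j\<le>d. q powi (2 * int j - int d) *s u j) = 0" using K0 by simp
  have "\<forall>j\<le>d. q powi (2 * int j - int d) *s u j \<in> U j"
    using u(1) decomp_subspace[OF decU] by (auto intro: vec.subspace_scale)
  then have "\<forall>j\<le>d. q powi (2 * int j - int d) *s u j = 0"
    using decomp_zero[OF decU _ s] by blast
  then have "\<forall>j\<le>d. u j = 0" using q_nz by simp
  then show "x = 0" using u(2) by simp
qed

lemma Ks_inv: "Ks ** Ki = mat 1" "Ki ** Ks = mat 1"
proof -
  have "\<exists>B. B ** Ks = mat 1" using K_inj matrix_left_invertible_ker by blast
  then have "invertible Ks" using invertible_left_inverse by blast
  then have "Ks ** Ki = mat 1 \<and> Ki ** Ks = mat 1"
    unfolding Ki_def matrix_inv_def invertible_def by (rule someI_ex)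
  then show "Ks ** Ki = mat 1" "Ki ** Ks = mat 1" by auto
qed

lemma Ki_U: "i \<le> d \<Longrightarrow> v \<in> U i \<Longrightarrow> Ki *v v = q powi (int d - 2 * int i) *s v"
proof -
  assume i: "i \<le> d" and v: "v \<in> U i"
  have "v = Ki *v (Ks *v v)" using Ks_inv(2) by (simp add: matmul_v[symmetric])
  also have "\<dots> = q powi (2 * int i - int d) *s (Ki *v v)" using K_U[OF i v] by (simp add: vector_scalar_commute)
  finally have "q powi (int d - 2 * int i) *s v = (q powi (int d - 2 * int i) * q powi (2 * int i - int d)) *s (Ki *v v)"
    by (metis vector_smult_assoc)
  moreover have "q powi (int d - 2 * int i) * q powi (2 * int i - int d) = 1"
    using q_nz by (simp add: power_int_add[symmetric])
  ultimately show ?thesis by simp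
qed

lemma F9: "i \<le> d \<Longrightarrow> x \<in> Hs (d - i) \<Longrightarrow> Ks *v x - q powi (2 * int i - int d) *s x \<in> ssum Vss {d - i<..d}"
proof -
  assume i: "i \<le> d" and x: "x \<in> Hs (d - i)"
  obtain u where u: "\<forall>j\<le>d. u j \<in> U j" "x = (\<Sum>j\<le>d. u j)"
    using decU unfolding decomposition_def by blast
  have z: "u j = 0" if "i < j" "j \<le> d" for j
    using flagdec.upper[OF flU i _ u(1) u(2)] x that by simp
  have "Ks *v x - q powi (2 * int i - int d) *s x
      = (\<Sum>j\<le>d. (q powi (2 * int j - int d) - q powi (2 * int i - int d)) *s u j)"
    unfolding u(2) by (rule diag_expand[OF K_U u(1)])
  also have "\<dots> \<in> ssum Vss {d - i<..d}"
  proof (rule ssum_sum)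
    fix j assume "j \<in> {..d}"
    then have jd: "j \<le> d" by simp
    show "(q powi (2 * int j - int d) - q powi (2 * int i - int d)) *s u j \<in> ssum Vss {d - i<..d}"
    proof (cases "j < i")
      case True
      have "u j \<in> Hs (d - j)" using u(1) jd unfolding U_def by auto
      also have "Hs (d - j) \<subseteq> ssum Vss {d - i<..d}" unfolding Hs_def
        by (rule ssum_mono) (use True i in auto)
      finally show ?thesis by (rule ssum_scale)
    next
      case False
      then have "j = i \<or> i < j" by auto
      then show ?thesis using z jd by (auto simp: ssum_def vec.span_zero)
    qed
  qed
  finally show ?thesis .
qed

lemma F10: "i \<le> d \<Longrightarrow> x \<in> L (d - i) \<Longrightarrow> Ki *v x - q powi (int d - 2 * int i) *s x \<in> ssum Vs {0..<d - i}"
proof -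
  assume i: "i \<le> d" and x: "x \<in> L (d - i)"
  obtain u where u: "\<forall>j\<le>d. u j \<in> U j" "x = (\<Sum>j\<le>d. u j)"
    using decU unfolding decomposition_def by blast
  have z: "u j = 0" if "j < i" for j
    using flagdec.lower[OF flU i _ u(1) u(2)] x that by simp
  have "Ki *v x - q powi (int d - 2 * int i) *s x
      = (\<Sum>j\<le>d. (q powi (int d - 2 * int j) - q powi (int d - 2 * int i)) *s u j)"
    unfolding u(2) by (rule diag_expand[OF Ki_U u(1)])
  also have "\<dots> \<in> ssum Vs {0..<d - i}"
  proof (rule ssum_sum)
    fix j assume "j \<in> {..d}"
    then have jd: "j \<le> d" by simp
    show "(q powi (int d - 2 * int j) - q powi (int d - 2 * int i)) *s u j \<in> ssum Vs {0..<d - i}"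
    proof (cases "i < j")
      case True
      have "u j \<in> L (d - j)" using u(1) jd unfolding U_def by auto
      also have "L (d - j) \<subseteq> ssum Vs {0..<d - i}" unfolding L_def
        by (rule ssum_mono) (use True jd in auto)
      finally show ?thesis by (rule ssum_scale)
    next
      case False
      then have "j = i \<or> j < i" by auto
      then show ?thesis using z jd by (auto simp: ssum_def vec.span_zero)
    qed
  qed
  finally show ?thesis .
qed

end

context TDs begin

lemma ssum0: "x \<in> ssum Z {} \<Longrightarrow> x = 0" by simp

lemma ltL: "0 < j \<Longrightarrow> ssum Vs {0..<j} = L (j - 1)"
  unfolding L_def by (rule arg_cong[where f="ssum Vs"]) auto
lemma ltLs: "0 < j \<Longrightarrow> ssum Vss {0..<j} = Ls (j - 1)"
  unfolding Ls_def by (rule arg_cong[where f="ssum Vss"]) auto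
lemma gtH: "ssum Vs {j<..d} = H (Suc j)"
  unfolding H_def by (rule arg_cong[where f="ssum Vs"]) auto
lemma gtHs: "ssum Vss {j<..d} = Hs (Suc j)"
  unfolding Hs_def by (rule arg_cong[where f="ssum Vss"]) auto

lemma Lmono: "i \<le> j \<Longrightarrow> L i \<subseteq> L j" unfolding L_def by (rule ssum_mono) auto
lemma Lsmono: "i \<le> j \<Longrightarrow> Ls i \<subseteq> Ls j" unfolding Ls_def by (rule ssum_mono) auto
lemma Hanti: "i \<le> j \<Longrightarrow> H j \<subseteq> H i" unfolding H_def by (rule ssum_mono) auto
lemma Hsanti: "i \<le> j \<Longrightarrow> Hs j \<subseteq> Hs i" unfolding Hs_def by (rule ssum_mono) auto

lemma diffin: "vec.subspace S \<Longrightarrow> y \<in> S \<Longrightarrow> x \<in> S \<Longrightarrow> y - c *s x \<in> S"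
  by (simp add: vec.subspace_diff vec.subspace_scale)

lemma R_ypk0: "vrel q x0 Ks"
proof (rule vrel_decomp[OF decU])
  fix i v assume i: "i \<le> d" and v: "v \<in> U i"
  have vL: "v \<in> L (d - i)" and vH: "v \<in> Hs (d - i)" using v unfolding U_def by auto
  have ex: "2 * int (d - i) - int d = - (2 * int i - int d)" using i by simp
  define w where "w = x0 *v v - q powi (- (2 * int i - int d)) *s v"
  have w1: "w \<in> ssum Vs {0..<d - i}" unfolding w_def ex[symmetric] using F3[OF _ vL] by simp
  have "Ks *v w = q powi (2 * int i - int d + 2) *s w"
  proof (cases "i = d")
    case True then show ?thesis using w1 by simp
  next
    case False
    then have id: "Suc i \<le> d" using i by simp
    have "w \<in> L (d - Suc i)" using w1 ltL[of "d - i"] id by simp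
    moreover have "w \<in> Hs (d - Suc i)"
    proof -
      have "Hs (d - i) \<subseteq> Hs (d - Suc i)" by (rule Hsanti) simp
      moreover have "x0 *v v \<in> Hs (d - i - 1)" using F1[OF _ vH] by simp
      ultimately show ?thesis unfolding w_def using vH by (intro diffin[OF subsp(4)]) auto
    qed
    ultimately have "w \<in> U (Suc i)" unfolding U_def by simp
    from K_U[OF id this] show ?thesis by (simp add: algebra_simps)
  qed
  then show "q *s (x0 *v (Ks *v v)) - inverse q *s (Ks *v (x0 *v v)) = (q - inverse q) *s v"
    by (intro vec_rel1[OF q_nz K_U[OF i v]]) (simp add: w_def)
qed


lemma R_ypk1: "vrel q x1 Ki"
proof (rule vrel_decomp[OF decU])
  fix i v assume i: "i \<le> d" and v: "v \<in> U i"
  have vL: "v \<in> L (d - i)" and vH: "v \<in> Hs (d - i)" using v unfolding U_def by auto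
  have ex: "int d - 2 * int (d - i) = - (int d - 2 * int i)" using i by simp
  define w where "w = x1 *v v - q powi (- (int d - 2 * int i)) *s v"
  have w1: "w \<in> ssum Vss {d - i<..d}" unfolding w_def ex[symmetric] using F8[OF _ vH] by simp
  have "Ki *v w = q powi (int d - 2 * int i + 2) *s w"
  proof (cases "i = 0")
    case True then show ?thesis using w1 by simp
  next
    case False
    then obtain k where k: "i = Suc k" by (cases i) auto
    have kd: "k \<le> d" using i k by simp
    have "w \<in> Hs (d - k)" using w1 gtHs[of "d - i"] k i by (simp add: Suc_diff_Suc)
    moreover have "w \<in> L (d - k)"
    proof -
      have "L (d - i) \<subseteq> L (d - k)" by (rule Lmono) (use k in simp)
      moreover have "x1 *v v \<in> L (Suc (d - i))" using F5[OF _ vL] k i by simp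
      moreover have "Suc (d - i) = d - k" using k i by simp
      ultimately show ?thesis unfolding w_def using vL by (intro diffin[OF subsp(1)]) auto
    qed
    ultimately have "w \<in> U k" unfolding U_def by simp
    from Ki_U[OF kd this] show ?thesis using k by (simp add: algebra_simps)
  qed
  then show "q *s (x1 *v (Ki *v v)) - inverse q *s (Ki *v (x1 *v v)) = (q - inverse q) *s v"
    by (intro vec_rel1[OF q_nz Ki_U[OF i v]]) (simp add: w_def)
qed

lemma F11: "1 \<le> j \<Longrightarrow> j \<le> d \<Longrightarrow> x \<in> H j \<Longrightarrow> Ks *v x \<in> H (j - 1)"
  unfolding H_def
proof (rule ssum_map[OF _ ssum_subspace])
  fix k u assume j: "1 \<le> j" "j \<le> d" and k: "k \<in> {j..d}" and u: "u \<in> Vs k"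
  have kd: "k \<le> d" and k1: "1 \<le> k" using k j by auto
  have sh: "x0 *v (Ks *v u - q powi (- (2 * int k - int d)) *s u)
      = q powi (2 * int k - int d - 2) *s (Ks *v u - q powi (- (2 * int k - int d)) *s u)"
    by (rule shiftL[OF q_nz R_ypk0 x0_V[OF kd u]])
  have ex: "2 * int k - int d - 2 = 2 * int (k - 1) - int d" using k1 by simp
  have "Ks *v u - q powi (- (2 * int k - int d)) *s u \<in> Vs (k - 1)"
    by (rule V_of_x0[OF _ sh[unfolded ex]]) (use kd in simp)
  then have a: "Ks *v u - q powi (- (2 * int k - int d)) *s u \<in> ssum Vs {j - 1..d}"
    by (rule ssum_base[rotated]) (use k in auto)
  have b: "q powi (- (2 * int k - int d)) *s u \<in> ssum Vs {j - 1..d}"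
    by (rule ssum_scale, rule ssum_base[where W=Vs and i=k]) (use k u in auto)
  have "Ks *v u = (Ks *v u - q powi (- (2 * int k - int d)) *s u) + q powi (- (2 * int k - int d)) *s u"
    by simp
  then show "Ks *v u \<in> ssum Vs {j - 1..d}" using ssum_add[OF a b] by metis
qed

lemma F12: "j < d \<Longrightarrow> x \<in> Ls j \<Longrightarrow> Ki *v x \<in> Ls (Suc j)"
  unfolding Ls_def
proof (rule ssum_map[OF _ ssum_subspace])
  fix k u assume j: "j < d" and k: "k \<in> {0..j}" and u: "u \<in> Vss k"
  have kd: "k \<le> d" and k1: "Suc k \<le> d" using k j by auto
  have sh: "x1 *v (Ki *v u - q powi (- (int d - 2 * int k)) *s u)
      = q powi (int d - 2 * int k - 2) *s (Ki *v u - q powi (- (int d - 2 * int k)) *s u)"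
    by (rule shiftL[OF q_nz R_ypk1 x1_V[OF kd u]])
  have ex: "int d - 2 * int k - 2 = int d - 2 * int (Suc k)" by simp
  have "Ki *v u - q powi (- (int d - 2 * int k)) *s u \<in> Vss (Suc k)"
    by (rule V_of_x1[OF k1 sh[unfolded ex]])
  then have a: "Ki *v u - q powi (- (int d - 2 * int k)) *s u \<in> ssum Vss {0..Suc j}"
    by (rule ssum_base[rotated]) (use k in auto)
  have b: "q powi (- (int d - 2 * int k)) *s u \<in> ssum Vss {0..Suc j}"
    by (rule ssum_scale, rule ssum_base[where W=Vss and i=k]) (use k u in auto)
  have "Ki *v u = (Ki *v u - q powi (- (int d - 2 * int k)) *s u) + q powi (- (int d - 2 * int k)) *s u"
    by simp
  then show "Ki *v u \<in> ssum Vss {0..Suc j}" using ssum_add[OF a b] by metis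
qed

lemma R_kym0: "vrel q Ks z0"
proof (rule vrel_decomp[OF decW])
  fix i v assume i: "i \<le> d" and v: "v \<in> W i"
  have vH: "v \<in> H i" and vHs: "v \<in> Hs (d - i)" using v unfolding W_def by auto
  define w where "w = Ks *v v - q powi (- (int d - 2 * int i)) *s v"
  have w1: "w \<in> ssum Vss {d - i<..d}" unfolding w_def using F9[OF i vHs] by simp
  have "z0 *v w = q powi (int d - 2 * int i + 2) *s w"
  proof (cases "i = 0")
    case True then show ?thesis using w1 by simp
  next
    case False
    then obtain k where k: "i = Suc k" by (cases i) auto
    have kd: "k \<le> d" using i k by simp
    have "w \<in> Hs (d - k)" using w1 gtHs[of "d - i"] k i by (simp add: Suc_diff_Suc)
    moreover have "w \<in> H k"
    proof -
      have "H i \<subseteq> H k" by (rule Hanti) (use k in simp)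
      moreover have "Ks *v v \<in> H k" using F11[OF _ i vH] k by simp
      ultimately show ?thesis unfolding w_def using vH by (intro diffin[OF subsp(2)]) auto
    qed
    ultimately have "w \<in> W k" unfolding W_def by simp
    from z0_W[OF kd this] show ?thesis using k by (simp add: algebra_simps)
  qed
  then show "q *s (Ks *v (z0 *v v)) - inverse q *s (z0 *v (Ks *v v)) = (q - inverse q) *s v"
    by (intro vec_rel1[OF q_nz z0_W[OF i v]]) (simp add: w_def)
qed

lemma R_kym1: "vrel q Ki z1"
proof (rule vrel_decomp[OF decY])
  fix i v assume i: "i \<le> d" and v: "v \<in> Y i"
  have vL: "v \<in> L (d - i)" and vLs: "v \<in> Ls i" using v unfolding Y_def by auto
  define w where "w = Ki *v v - q powi (- (2 * int i - int d)) *s v"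
  have w1: "w \<in> ssum Vs {0..<d - i}" unfolding w_def using F10[OF i vL] by simp
  have "z1 *v w = q powi (2 * int i - int d + 2) *s w"
  proof (cases "i = d")
    case True then show ?thesis using w1 by simp
  next
    case False
    then have id: "Suc i \<le> d" using i by simp
    have "w \<in> L (d - Suc i)" using w1 ltL[of "d - i"] id by simp
    moreover have "w \<in> Ls (Suc i)"
    proof -
      have "Ls i \<subseteq> Ls (Suc i)" by (rule Lsmono) simp
      moreover have "Ki *v v \<in> Ls (Suc i)" using F12[OF _ vLs] id by simp
      ultimately show ?thesis unfolding w_def using vLs by (intro diffin[OF subsp(3)]) auto
    qed
    ultimately have "w \<in> Y (Suc i)" unfolding Y_def by simp
    from z1_Y[OF id this] show ?thesis by (simp add: algebra_simps)
  qed
  then show "q *s (Ki *v (z1 *v v)) - inverse q *s (z1 *v (Ki *v v)) = (q - inverse q) *s v"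
    by (intro vec_rel1[OF q_nz z1_Y[OF i v]]) (simp add: w_def)
qed

lemma R_ymyp0: "vrel q z0 x0"
proof (rule vrel_decomp[OF decW])
  fix i v assume i: "i \<le> d" and v: "v \<in> W i"
  have vH: "v \<in> H i" and vHs: "v \<in> Hs (d - i)" using v unfolding W_def by auto
  define w where "w = x0 *v v - q powi (- (int d - 2 * int i)) *s v"
  have w1: "w \<in> ssum Vs {i<..d}" unfolding w_def using F4[OF i vH] by simp
  have "z0 *v w = q powi (int d - 2 * int i - 2) *s w"
  proof (cases "i = d")
    case True then show ?thesis using w1 by simp
  next
    case False
    then have id: "Suc i \<le> d" using i by simp
    have "w \<in> H (Suc i)" using w1 gtH by simp
    moreover have "w \<in> Hs (d - Suc i)"
    proof -
      have "Hs (d - i) \<subseteq> Hs (d - Suc i)" by (rule Hsanti) simp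
      moreover have "x0 *v v \<in> Hs (d - i - 1)" using F1[OF _ vHs] by simp
      ultimately show ?thesis unfolding w_def using vHs by (intro diffin[OF subsp(4)]) auto
    qed
    ultimately have "w \<in> W (Suc i)" unfolding W_def by simp
    from z0_W[OF id this] show ?thesis by (simp add: algebra_simps)
  qed
  then show "q *s (z0 *v (x0 *v v)) - inverse q *s (x0 *v (z0 *v v)) = (q - inverse q) *s v"
    by (intro vec_rel2[OF q_nz z0_W[OF i v]]) (simp add: w_def)
qed

lemma R_ymyp1: "vrel q z1 x1"
proof (rule vrel_decomp[OF decY])
  fix i v assume i: "i \<le> d" and v: "v \<in> Y i"
  have vL: "v \<in> L (d - i)" and vLs: "v \<in> Ls i" using v unfolding Y_def by auto
  define w where "w = x1 *v v - q powi (- (2 * int i - int d)) *s v"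
  have w1: "w \<in> ssum Vss {0..<i}" unfolding w_def using F7[OF i vLs] by simp
  have "z1 *v w = q powi (2 * int i - int d - 2) *s w"
  proof (cases "i = 0")
    case True then show ?thesis using w1 by simp
  next
    case False
    then obtain k where k: "i = Suc k" by (cases i) auto
    have kd: "k \<le> d" using i k by simp
    have "w \<in> Ls k" using w1 ltLs[of i] k by simp
    moreover have "w \<in> L (d - k)"
    proof -
      have "L (d - i) \<subseteq> L (d - k)" by (rule Lmono) (use k in simp)
      moreover have "x1 *v v \<in> L (Suc (d - i))" using F5[OF _ vL] k i by simp
      moreover have "Suc (d - i) = d - k" using k i by simp
      ultimately show ?thesis unfolding w_def using vL by (intro diffin[OF subsp(1)]) auto
    qed
    ultimately have "w \<in> Y k" unfolding Y_def by simp
    from z1_Y[OF kd this] show ?thesis using k by (simp add: algebra_simps)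
  qed
  then show "q *s (z1 *v (x1 *v v)) - inverse q *s (x1 *v (z1 *v v)) = (q - inverse q) *s v"
    by (intro vec_rel2[OF q_nz z1_Y[OF i v]]) (simp add: w_def)
qed

lemma R_ypym0: "vrel q x0 z1"
proof (rule vrel_decomp[OF decY])
  fix i v assume i: "i \<le> d" and v: "v \<in> Y i"
  have vL: "v \<in> L (d - i)" and vLs: "v \<in> Ls i" using v unfolding Y_def by auto
  have ex: "2 * int (d - i) - int d = - (2 * int i - int d)" using i by simp
  define w where "w = x0 *v v - q powi (- (2 * int i - int d)) *s v"
  have w1: "w \<in> ssum Vs {0..<d - i}" unfolding w_def ex[symmetric] using F3[OF _ vL] by simp
  have "z1 *v w = q powi (2 * int i - int d + 2) *s w"
  proof (cases "i = d")
    case True then show ?thesis using w1 by simp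
  next
    case False
    then have id: "Suc i \<le> d" using i by simp
    have "w \<in> L (d - Suc i)" using w1 ltL[of "d - i"] id by simp
    moreover have "w \<in> Ls (Suc i)"
    proof -
      have "Ls i \<subseteq> Ls (Suc i)" by (rule Lsmono) simp
      moreover have "x0 *v v \<in> Ls (Suc i)" using F2[OF _ vLs] id by simp
      ultimately show ?thesis unfolding w_def using vLs by (intro diffin[OF subsp(3)]) auto
    qed
    ultimately have "w \<in> Y (Suc i)" unfolding Y_def by simp
    from z1_Y[OF id this] show ?thesis by (simp add: algebra_simps)
  qed
  then show "q *s (x0 *v (z1 *v v)) - inverse q *s (z1 *v (x0 *v v)) = (q - inverse q) *s v"
    by (intro vec_rel1[OF q_nz z1_Y[OF i v]]) (simp add: w_def)
qed

lemma R_ypym1: "vrel q x1 z0"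
proof (rule vrel_decomp[OF decW])
  fix i v assume i: "i \<le> d" and v: "v \<in> W i"
  have vH: "v \<in> H i" and vHs: "v \<in> Hs (d - i)" using v unfolding W_def by auto
  have ex: "int d - 2 * int (d - i) = - (int d - 2 * int i)" using i by simp
  define w where "w = x1 *v v - q powi (- (int d - 2 * int i)) *s v"
  have w1: "w \<in> ssum Vss {d - i<..d}" unfolding w_def ex[symmetric] using F8[OF _ vHs] by simp
  have "z0 *v w = q powi (int d - 2 * int i + 2) *s w"
  proof (cases "i = 0")
    case True then show ?thesis using w1 by simp
  next
    case False
    then obtain k where k: "i = Suc k" by (cases i) auto
    have kd: "k \<le> d" using i k by simp
    have "w \<in> Hs (d - k)" using w1 gtHs[of "d - i"] k i by (simp add: Suc_diff_Suc)
    moreover have "w \<in> H k"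
    proof -
      have "H i \<subseteq> H k" by (rule Hanti) (use k in simp)
      moreover have "x1 *v v \<in> H k" using F6[OF i vH] k by simp
      ultimately show ?thesis unfolding w_def using vH by (intro diffin[OF subsp(2)]) auto
    qed
    ultimately have "w \<in> W k" unfolding W_def by simp
    from z0_W[OF kd this] show ?thesis using k by (simp add: algebra_simps)
  qed
  then show "q *s (x1 *v (z0 *v v)) - inverse q *s (z0 *v (x1 *v v)) = (q - inverse q) *s v"
    by (intro vec_rel1[OF q_nz z0_W[OF i v]]) (simp add: w_def)
qed

end

context TDs begin

lemma GL_H: "vrel q x0 M \<Longrightarrow> 1 \<le> j \<Longrightarrow> j \<le> d \<Longrightarrow> x \<in> H j \<Longrightarrow> M *v x \<in> H (j - 1)"
  unfolding H_def
proof (rule ssum_map[OF _ ssum_subspace])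
  fix k u assume R: "vrel q x0 M" and j: "1 \<le> j" "j \<le> d" and k: "k \<in> {j..d}" and u: "u \<in> Vs k"
  have kd: "k \<le> d" and k1: "1 \<le> k" using k j by auto
  have sh: "x0 *v (M *v u - q powi (- (2 * int k - int d)) *s u)
      = q powi (2 * int k - int d - 2) *s (M *v u - q powi (- (2 * int k - int d)) *s u)"
    by (rule shiftL[OF q_nz R x0_V[OF kd u]])
  have ex: "2 * int k - int d - 2 = 2 * int (k - 1) - int d" using k1 by simp
  have "M *v u - q powi (- (2 * int k - int d)) *s u \<in> Vs (k - 1)"
    by (rule V_of_x0[OF _ sh[unfolded ex]]) (use kd in simp)
  then have a: "M *v u - q powi (- (2 * int k - int d)) *s u \<in> ssum Vs {j - 1..d}"
    by (rule ssum_base[rotated]) (use k in auto)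
  have b: "q powi (- (2 * int k - int d)) *s u \<in> ssum Vs {j - 1..d}"
    by (rule ssum_scale, rule ssum_base[where W=Vs and i=k]) (use k u in auto)
  have "M *v u = (M *v u - q powi (- (2 * int k - int d)) *s u) + q powi (- (2 * int k - int d)) *s u"
    by simp
  then show "M *v u \<in> ssum Vs {j - 1..d}" using ssum_add[OF a b] by metis
qed

lemma GL_Ls: "vrel q x1 M \<Longrightarrow> j < d \<Longrightarrow> x \<in> Ls j \<Longrightarrow> M *v x \<in> Ls (Suc j)"
  unfolding Ls_def
proof (rule ssum_map[OF _ ssum_subspace])
  fix k u assume R: "vrel q x1 M" and j: "j < d" and k: "k \<in> {0..j}" and u: "u \<in> Vss k"
  have kd: "k \<le> d" and k1: "Suc k \<le> d" using k j by auto
  have sh: "x1 *v (M *v u - q powi (- (int d - 2 * int k)) *s u)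
      = q powi (int d - 2 * int k - 2) *s (M *v u - q powi (- (int d - 2 * int k)) *s u)"
    by (rule shiftL[OF q_nz R x1_V[OF kd u]])
  have ex: "int d - 2 * int k - 2 = int d - 2 * int (Suc k)" by simp
  have "M *v u - q powi (- (int d - 2 * int k)) *s u \<in> Vss (Suc k)"
    by (rule V_of_x1[OF k1 sh[unfolded ex]])
  then have a: "M *v u - q powi (- (int d - 2 * int k)) *s u \<in> ssum Vss {0..Suc j}"
    by (rule ssum_base[rotated]) (use k in auto)
  have b: "q powi (- (int d - 2 * int k)) *s u \<in> ssum Vss {0..Suc j}"
    by (rule ssum_scale, rule ssum_base[where W=Vss and i=k]) (use k u in auto)
  have "M *v u = (M *v u - q powi (- (int d - 2 * int k)) *s u) + q powi (- (int d - 2 * int k)) *s u"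
    by simp
  then show "M *v u \<in> ssum Vss {0..Suc j}" using ssum_add[OF a b] by metis
qed

lemma GR_Hs: "vrel q M x1 \<Longrightarrow> 1 \<le> j \<Longrightarrow> j \<le> d \<Longrightarrow> x \<in> Hs j \<Longrightarrow> M *v x \<in> Hs (j - 1)"
  unfolding Hs_def
proof (rule ssum_map[OF _ ssum_subspace])
  fix k u assume R: "vrel q M x1" and j: "1 \<le> j" "j \<le> d" and k: "k \<in> {j..d}" and u: "u \<in> Vss k"
  have kd: "k \<le> d" and k1: "1 \<le> k" using k j by auto
  have sh: "x1 *v (M *v u - q powi (- (int d - 2 * int k)) *s u)
      = q powi (int d - 2 * int k + 2) *s (M *v u - q powi (- (int d - 2 * int k)) *s u)"
    by (rule shiftR[OF q_nz R x1_V[OF kd u]])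
  have ex: "int d - 2 * int k + 2 = int d - 2 * int (k - 1)" using k1 by simp
  have "M *v u - q powi (- (int d - 2 * int k)) *s u \<in> Vss (k - 1)"
    by (rule V_of_x1[OF _ sh[unfolded ex]]) (use kd in simp)
  then have a: "M *v u - q powi (- (int d - 2 * int k)) *s u \<in> ssum Vss {j - 1..d}"
    by (rule ssum_base[rotated]) (use k in auto)
  have b: "q powi (- (int d - 2 * int k)) *s u \<in> ssum Vss {j - 1..d}"
    by (rule ssum_scale, rule ssum_base[where W=Vss and i=k]) (use k u in auto)
  have "M *v u = (M *v u - q powi (- (int d - 2 * int k)) *s u) + q powi (- (int d - 2 * int k)) *s u"
    by simp
  then show "M *v u \<in> ssum Vss {j - 1..d}" using ssum_add[OF a b] by metis
qed

lemma GR_L: "vrel q M x0 \<Longrightarrow> j < d \<Longrightarrow> x \<in> L j \<Longrightarrow> M *v x \<in> L (Suc j)"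
  unfolding L_def
proof (rule ssum_map[OF _ ssum_subspace])
  fix k u assume R: "vrel q M x0" and j: "j < d" and k: "k \<in> {0..j}" and u: "u \<in> Vs k"
  have kd: "k \<le> d" and k1: "Suc k \<le> d" using k j by auto
  have sh: "x0 *v (M *v u - q powi (- (2 * int k - int d)) *s u)
      = q powi (2 * int k - int d + 2) *s (M *v u - q powi (- (2 * int k - int d)) *s u)"
    by (rule shiftR[OF q_nz R x0_V[OF kd u]])
  have ex: "2 * int k - int d + 2 = 2 * int (Suc k) - int d" by simp
  have "M *v u - q powi (- (2 * int k - int d)) *s u \<in> Vs (Suc k)"
    by (rule V_of_x0[OF k1 sh[unfolded ex]])
  then have a: "M *v u - q powi (- (2 * int k - int d)) *s u \<in> ssum Vs {0..Suc j}"
    by (rule ssum_base[rotated]) (use k in auto)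
  have b: "q powi (- (2 * int k - int d)) *s u \<in> ssum Vs {0..Suc j}"
    by (rule ssum_scale, rule ssum_base[where W=Vs and i=k]) (use k u in auto)
  have "M *v u = (M *v u - q powi (- (2 * int k - int d)) *s u) + q powi (- (2 * int k - int d)) *s u"
    by simp
  then show "M *v u \<in> ssum Vs {0..Suc j}" using ssum_add[OF a b] by metis
qed

lemma span_eig:
  assumes ord: "eigenspace_ordering M Z d" and diag: "diagonalizable M"
  shows "vec.span (\<Union>k\<le>d. Z k) = UNIV"
proof -
  obtain th where th: "{t. is_eigenvalue M t} = th ` {0..d}" "\<forall>i\<le>d. Z i = eigenspace M (th i)"
    using ord unfolding eigenspace_ordering_def by blast
  have "(\<Union>t. eigenspace M t) \<subseteq> vec.span (\<Union>k\<le>d. Z k)"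
  proof
    fix v assume "v \<in> (\<Union>t. eigenspace M t)"
    then obtain t where v: "v \<in> eigenspace M t" by blast
    show "v \<in> vec.span (\<Union>k\<le>d. Z k)"
    proof (cases "v = 0")
      case True then show ?thesis by (simp add: vec.span_zero)
    next
      case False
      then have "is_eigenvalue M t" using v unfolding is_eigenvalue_def by auto
      then have "t \<in> {t. is_eigenvalue M t}" by simp
      then have "t \<in> th ` {0..d}" unfolding th(1) .
      then obtain i where i: "i \<le> d" "t = th i" by auto
      then have "v \<in> Z i" using th(2) v by simp
      then show ?thesis using i by (intro vec.span_base) auto
    qed
  qed
  then have "vec.span (\<Union>t. eigenspace M t) \<subseteq> vec.span (\<Union>k\<le>d. Z k)"
    by (rule vec.span_minimal[OF _ vec.subspace_span])
  then show ?thesis using diag unfolding diagonalizable_def by auto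
qed

lemma diagA: "diagonalizable A" and diagAs: "diagonalizable As"
  using TD unfolding tridiagonal_pair_def by simp_all

lemma spanV: "vec.span (\<Union>k\<le>d. Vs k) = UNIV"
  by (rule span_eig[OF Vord(1) diagA])
lemma spanVs: "vec.span (\<Union>k\<le>d. Vss k) = UNIV"
  by (rule span_eig[OF Vsord(1) diagAs])

lemma H0_univ: "H 0 = UNIV"
proof -
  have "{0..d} = {..d}" by auto
  then show ?thesis unfolding H_def ssum_def using spanV by simp
qed
lemma L_univ: "L d = UNIV"
proof -
  have "{0..d} = {..d}" by auto
  then show ?thesis unfolding L_def ssum_def using spanV by simp
qed

end

lemma near_span:
  fixes w :: "nat \<Rightarrow> 'k::field^'n"
  assumes "\<forall>j\<le>d. w j \<in> Z j" "x = (\<Sum>j\<le>d. w j)" "\<And>j. j \<le> d \<Longrightarrow> w j \<noteq> 0 \<Longrightarrow> j \<in> N"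
  shows "x \<in> vec.span (\<Union>j\<in>N \<inter> {0..d}. Z j)"
  unfolding assms(2)
proof (rule vec.span_sum)
  fix j assume "j \<in> {..d}"
  then have jd: "j \<le> d" by simp
  show "w j \<in> vec.span (\<Union>j\<in>N \<inter> {0..d}. Z j)"
  proof (cases "w j = 0")
    case True then show ?thesis by (simp add: vec.span_zero)
  next
    case False
    then have "j \<in> N" using assms(3) jd by blast
    then have jN: "j \<in> N \<inter> {0..d}" using jd by simp
    have "w j \<in> Z j" using assms(1) jd by simp
    then have "w j \<in> (\<Union>j\<in>N \<inter> {0..d}. Z j)" using jN by blast
    then show ?thesis by (rule vec.span_base)
  qed
qed

lemma near1:
  fixes q :: "'k::field"
  assumes q: "q \<noteq> 0" and k': "k' \<in> {k - 1, k, k + 1}"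
  shows "q powi (2 * int k' - int d) = q powi (2 * int k - int d)
       \<or> q powi (2 * int k' - int d) = q^2 * q powi (2 * int k - int d)
       \<or> q powi (2 * int k' - int d) = q powi (2 * int k - int d) / q^2"
proof -
  consider "k' = k" | "k' = k + 1" | "k' = k - 1" "k \<ge> 1" using k' by force
  then show ?thesis
  proof cases
    case 2
    then have "q powi (2 * int k' - int d) = q powi ((2 * int k - int d) + 2)"
      by (intro arg_cong[where f="\<lambda>m. q powi m"]) simp
    then show ?thesis using e_rw(2)[OF q] by simp
  next
    case 3
    then have "q powi (2 * int k' - int d) = q powi ((2 * int k - int d) - 2)"
      by (intro arg_cong[where f="\<lambda>m. q powi m"]) simp
    then show ?thesis using e_rw(3)[OF q] by simp
  qed simp
qed

lemma near2:
  fixes q :: "'k::field"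
  assumes q: "q \<noteq> 0" and k': "k' \<in> {k - 1, k, k + 1}"
  shows "q powi (int d - 2 * int k') = q powi (int d - 2 * int k)
       \<or> q powi (int d - 2 * int k') = q^2 * q powi (int d - 2 * int k)
       \<or> q powi (int d - 2 * int k') = q powi (int d - 2 * int k) / q^2"
proof -
  consider "k' = k" | "k' = k + 1" | "k' = k - 1" "k \<ge> 1" using k' by force
  then show ?thesis
  proof cases
    case 2
    then have "q powi (int d - 2 * int k') = q powi ((int d - 2 * int k) - 2)"
      by (intro arg_cong[where f="\<lambda>m. q powi m"]) simp
    then show ?thesis using e_rw(3)[OF q] by simp
  next
    case 3
    then have "q powi (int d - 2 * int k') = q powi ((int d - 2 * int k) + 2)"
      by (intro arg_cong[where f="\<lambda>m. q powi m"]) simp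
    then show ?thesis using e_rw(2)[OF q] by simp
  qed simp
qed

context TDs begin

abbreviation "serre Dg T \<equiv> Dg ** Dg ** Dg ** T - mat (qint3 q) ** (Dg ** Dg ** T ** Dg)
          + mat (qint3 q) ** (Dg ** T ** Dg ** Dg) - T ** Dg ** Dg ** Dg"

lemma serre_p0: "serre x0 x1 = 0"
proof (rule span_mat_eq[OF spanV])
  fix v assume "v \<in> (\<Union>k\<le>d. Vs k)"
  then obtain k where k: "k \<le> d" and v: "v \<in> Vs k" by blast
  have "As *v v \<in> ssum Vs ({k - 1, k, k + 1} \<inter> {0..d})"
    using Vord(2) k v unfolding tridiag_ordering_def by blast
  then have T: "x1 *v v \<in> vec.span (\<Union>j\<in>{k - 1, k, k + 1} \<inter> {0..d}. Vs j)"
    unfolding x1_scale ssum_def by (rule vec.span_scale)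
  have "serre x0 x1 *v v = 0"
  proof (rule serre_vec[OF q_nz q2 x0_V[OF k v] T])
    fix u assume "u \<in> (\<Union>j\<in>{k - 1, k, k + 1} \<inter> {0..d}. Vs j)"
    then obtain j where j0: "j \<in> {k - 1, k, k + 1} \<inter> {0..d}" and u: "u \<in> Vs j" by blast
    then have j: "j \<in> {k - 1, k, k + 1}" "j \<le> d" by auto
    show "\<exists>m. x0 *v u = m *s u \<and> (m = q powi (2 * int k - int d) \<or> m = q\<^sup>2 * q powi (2 * int k - int d) \<or> m = q powi (2 * int k - int d) / q\<^sup>2)"
      using x0_V[OF j(2) u] near1[OF q_nz j(1)] by blast
  qed
  then show "serre x0 x1 *v v = 0 *v v" by simp
qed

lemma serre_p1: "serre x1 x0 = 0"
proof (rule span_mat_eq[OF spanVs])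
  fix v assume "v \<in> (\<Union>k\<le>d. Vss k)"
  then obtain k where k: "k \<le> d" and v: "v \<in> Vss k" by blast
  have "A *v v \<in> ssum Vss ({k - 1, k, k + 1} \<inter> {0..d})"
    using Vsord(2) k v unfolding tridiag_ordering_def by blast
  then have T: "x0 *v v \<in> vec.span (\<Union>j\<in>{k - 1, k, k + 1} \<inter> {0..d}. Vss j)"
    unfolding x0_scale ssum_def by (rule vec.span_scale)
  have "serre x1 x0 *v v = 0"
  proof (rule serre_vec[OF q_nz q2 x1_V[OF k v] T])
    fix u assume "u \<in> (\<Union>j\<in>{k - 1, k, k + 1} \<inter> {0..d}. Vss j)"
    then obtain j where j0: "j \<in> {k - 1, k, k + 1} \<inter> {0..d}" and u: "u \<in> Vss j" by blast
    then have j: "j \<in> {k - 1, k, k + 1}" "j \<le> d" by auto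
    show "\<exists>m. x1 *v u = m *s u \<and> (m = q powi (int d - 2 * int k) \<or> m = q\<^sup>2 * q powi (int d - 2 * int k) \<or> m = q powi (int d - 2 * int k) / q\<^sup>2)"
      using x1_V[OF j(2) u] near2[OF q_nz j(1)] by blast
  qed
  then show "serre x1 x0 *v v = 0 *v v" by simp
qed

lemma serre_m0: "serre z0 z1 = 0"
proof (rule decomp_mat_eq[OF decW])
  fix i v assume i: "i \<le> d" and v: "v \<in> W i"
  have vH: "v \<in> H i" and vHs: "v \<in> Hs (d - i)" using v unfolding W_def by auto
  obtain w where w: "\<forall>j\<le>d. w j \<in> W j" "z1 *v v = (\<Sum>j\<le>d. w j)"
    using decW unfolding decomposition_def by blast
  have zH: "z1 *v v \<in> H (i - 1)"
  proof (cases "i = 0")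
    case True then show ?thesis using H0_univ by simp
  next
    case False then show ?thesis using GL_H[OF R_ypym0 _ i vH] by simp
  qed
  have lo: "w j = 0" if "j < i - 1" for j
    using flagdec.lower[OF flW _ zH w(1) w(2) that] i by simp
  have up: "w j = 0" if "i + 1 < j" "j \<le> d" for j
  proof -
    have id: "i < d" using that by simp
    have "z1 *v v \<in> Hs (d - i - 1)" using GR_Hs[OF R_ymyp1 _ _ vHs] id by simp
    then have "z1 *v v \<in> Hs (d - (i + 1))" by simp
    from flagdec.upper[OF flW _ this w(1) w(2)] that show ?thesis by simp
  qed
  have T: "z1 *v v \<in> vec.span (\<Union>j\<in>{i - 1, i, i + 1} \<inter> {0..d}. W j)"
  proof (rule near_span[OF w])
    fix j assume "j \<le> d" "w j \<noteq> 0"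
    then show "j \<in> {i - 1, i, i + 1}" using lo up by (cases "j < i - 1"; cases "i + 1 < j") auto
  qed
  have "serre z0 z1 *v v = 0"
  proof (rule serre_vec[OF q_nz q2 z0_W[OF i v] T])
    fix u assume "u \<in> (\<Union>j\<in>{i - 1, i, i + 1} \<inter> {0..d}. W j)"
    then obtain j where j0: "j \<in> {i - 1, i, i + 1} \<inter> {0..d}" and u: "u \<in> W j" by blast
    then have j: "j \<in> {i - 1, i, i + 1}" "j \<le> d" by auto
    show "\<exists>m. z0 *v u = m *s u \<and> (m = q powi (int d - 2 * int i) \<or> m = q\<^sup>2 * q powi (int d - 2 * int i) \<or> m = q powi (int d - 2 * int i) / q\<^sup>2)"
      using z0_W[OF j(2) u] near2[OF q_nz j(1)] by blast
  qed
  then show "serre z0 z1 *v v = 0 *v v" by simp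
qed

lemma serre_m1: "serre z1 z0 = 0"
proof (rule decomp_mat_eq[OF decY])
  fix i v assume i: "i \<le> d" and v: "v \<in> Y i"
  have vL: "v \<in> L (d - i)" and vLs: "v \<in> Ls i" using v unfolding Y_def by auto
  obtain w where w: "\<forall>j\<le>d. w j \<in> Y j" "z0 *v v = (\<Sum>j\<le>d. w j)"
    using decY unfolding decomposition_def by blast
  have lo: "w j = 0" if "j < i - 1" for j
  proof -
    have i1: "1 \<le> i" using that by simp
    have "z0 *v v \<in> L (Suc (d - i))" using GR_L[OF R_ymyp0 _ vL] i1 i by simp
    then have "z0 *v v \<in> L (d - (i - 1))" using i1 i by (simp add: Suc_diff_le)
    from flagdec.lower[OF flY _ this w(1) w(2)] that i show ?thesis by simp
  qed
  have up: "w j = 0" if "i + 1 < j" "j \<le> d" for j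
  proof -
    have id: "i < d" using that by simp
    have "z0 *v v \<in> Ls (Suc i)" using GL_Ls[OF R_ypym1 id vLs] .
    then have "z0 *v v \<in> Ls (i + 1)" by simp
    from flagdec.upper[OF flY _ this w(1) w(2)] that show ?thesis by simp
  qed
  have T: "z0 *v v \<in> vec.span (\<Union>j\<in>{i - 1, i, i + 1} \<inter> {0..d}. Y j)"
  proof (rule near_span[OF w])
    fix j assume "j \<le> d" "w j \<noteq> 0"
    then show "j \<in> {i - 1, i, i + 1}" using lo up by (cases "j < i - 1"; cases "i + 1 < j") auto
  qed
  have "serre z1 z0 *v v = 0"
  proof (rule serre_vec[OF q_nz q2 z1_Y[OF i v] T])
    fix u assume "u \<in> (\<Union>j\<in>{i - 1, i, i + 1} \<inter> {0..d}. Y j)"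
    then obtain j where j0: "j \<in> {i - 1, i, i + 1} \<inter> {0..d}" and u: "u \<in> Y j" by blast
    then have j: "j \<in> {i - 1, i, i + 1}" "j \<le> d" by auto
    show "\<exists>m. z1 *v u = m *s u \<and> (m = q powi (2 * int i - int d) \<or> m = q\<^sup>2 * q powi (2 * int i - int d) \<or> m = q powi (2 * int i - int d) / q\<^sup>2)"
      using z1_Y[OF j(2) u] near1[OF q_nz j(1)] by blast
  qed
  then show "serre z1 z0 *v v = 0 *v v" by simp
qed

end

context TDs begin

lemma irr: "U_irreducible x0 x1 z0 z1 Ks Ki Ki Ks"
  unfolding U_irreducible_def
proof (intro allI impI)
  fix U :: "('k^'n) set"
  assume h: "vec.subspace U \<and> (\<forall>X\<in>{x0, x1, z0, z1, Ks, Ki, Ki, Ks}. (\<lambda>v. X *v v) ` U \<subseteq> U)"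
  then have sU: "vec.subspace U" and i0: "(\<lambda>v. x0 *v v) ` U \<subseteq> U" and i1: "(\<lambda>v. x1 *v v) ` U \<subseteq> U"
    by auto
  have "(\<lambda>v. A *v v) ` U \<subseteq> U"
  proof
    fix y assume "y \<in> (\<lambda>v. A *v v) ` U"
    then obtain u where u: "u \<in> U" "y = A *v u" by blast
    have "A *v u = a *s (x0 *v u)" using nz(1) unfolding x0_scale by (simp add: vector_smult_assoc)
    moreover have "x0 *v u \<in> U" using i0 u(1) by blast
    ultimately show "y \<in> U" using u(2) sU by (simp add: vec.subspace_scale)
  qed
  moreover have "(\<lambda>v. As *v v) ` U \<subseteq> U"
  proof
    fix y assume "y \<in> (\<lambda>v. As *v v) ` U"
    then obtain u where u: "u \<in> U" "y = As *v u" by blast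
    have "As *v u = as *s (x1 *v u)" using nz(2) unfolding x1_scale by (simp add: vector_smult_assoc)
    moreover have "x1 *v u \<in> U" using i1 u(1) by blast
    ultimately show "y \<in> U" using u(2) sU by (simp add: vec.subspace_scale)
  qed
  moreover have "\<forall>U. vec.subspace U \<and> (\<lambda>v. A *v v) ` U \<subseteq> U \<and> (\<lambda>v. As *v v) ` U \<subseteq> U
          \<longrightarrow> U = {0} \<or> U = UNIV"
    using TD unfolding tridiagonal_pair_def by simp
  ultimately show "U = {0} \<or> U = UNIV" using sU by blast
qed

lemma rels: "U_relations q x0 x1 z0 z1 Ks Ki Ki Ks"
proof -
  note V = vrel_U[OF _ qq]
  have I: "Ks ** Ki = mat 1" "Ki ** Ks = mat 1" by (rule Ks_inv)+
  show ?thesis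
    unfolding U_relations_def Let_def
    using I V[OF R_ypk0] V[OF R_ypk1] V[OF R_kym0] V[OF R_kym1] V[OF R_ymyp0] V[OF R_ymyp1]
      V[OF R_ypym0] V[OF R_ypym1] serre_p0 serre_p1 serre_m0 serre_m1
    by simp
qed

lemma main: "irreducible_U_module q x0 x1 z0 z1 Ks Ki Ki Ks"
  unfolding irreducible_U_module_def using rels irr by simp

end

theorem theorem13p2:
  fixes q a as b bs :: "'k::alg_closed_field"
    and A As B Bs Ks :: "'k^'n^'n"
    and Vs Vss :: "nat \<Rightarrow> ('k^'n) set"
    and d :: nat
  assumes q_nz: "q \<noteq> 0"
    and q_not_root: "\<forall>m::nat. m > 0 \<longrightarrow> q ^ m \<noteq> 1"
    and nz: "a \<noteq> 0" "as \<noteq> 0" "b \<noteq> 0" "bs \<noteq> 0"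
    and TD: "tridiagonal_pair A As"
    and Vord: "eigenspace_ordering A Vs d" "tridiag_ordering As Vs d"
    and Vsord: "eigenspace_ordering As Vss d" "tridiag_ordering A Vss d"
    and evA: "\<forall>i\<le>d. Vs i = eigenspace A (a * q powi (2 * int i - int d))"
    and evAs: "\<forall>i\<le>d. Vss i = eigenspace As (as * q powi (int d - 2 * int i))"
    and dec1: "decomposition (\<lambda>i. ssum Vss {0..i} \<inter> ssum Vs {0..d - i}) d"
    and dec2: "decomposition (\<lambda>i. ssum Vss {d - i..d} \<inter> ssum Vs {i..d}) d"
    and dec3: "decomposition (\<lambda>i. ssum Vss {d - i..d} \<inter> ssum Vs {0..d - i}) d"
    and B_def: "\<forall>i\<le>d. \<forall>v \<in> ssum Vss {0..i} \<inter> ssum Vs {0..d - i}.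
                  B *v v = (b * q powi (2 * int i - int d)) *s v"
    and Bs_def: "\<forall>i\<le>d. \<forall>v \<in> ssum Vss {d - i..d} \<inter> ssum Vs {i..d}.
                  Bs *v v = (bs * q powi (int d - 2 * int i)) *s v"
    and Ks_def: "\<forall>i\<le>d. \<forall>v \<in> ssum Vss {d - i..d} \<inter> ssum Vs {0..d - i}.
                  Ks *v v = (q powi (2 * int i - int d)) *s v"
  shows "irreducible_U_module q
           (mat (inverse a) ** A) (mat (inverse as) ** As)
           (mat (inverse bs) ** Bs) (mat (inverse b) ** B)
           Ks (matrix_inv Ks) (matrix_inv Ks) Ks"
proof -
  interpret T: TDs q a as b bs A As B Bs Ks Vs Vss d
    by (unfold_locales; fact assms)
  show ?thesis using T.main unfolding T.x0_def T.x1_def T.z0_def T.z1_def T.Ki_def .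
qed

end
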